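(* Let $(P,\le,A_1\ldots A_k)$ be a regular poset of width $w$ with node tree $(\mathcal{N},\prec)$. Suppose $\mathcal{F}\subseteq\mathcal{N}$ is ancestor-free and for every node $(X,Y,<)\in\mathcal{F}$ a perfect matching $M(X,Y,<)$ of the bipartite graph $(X,Y,<)$ is fixed. Let $F=\bigcup_{(X,Y,<)\in\mathcal{F}}(X\cup Y)$. Then there is a partition of $(F,\le)$ into $w$ chains such that for every node $(X,Y,<)\in\mathcal{F}$ and every edge $(a<b)$ of $M(X,Y,<)$, the elements $a$ and $b$ lie in the same chain of this partition.
   Context: Let $(P,\le)$ be a finite poset of width $w$. For $A\subseteq P$ let $A{\uparrow}=\{y: x\le y\text{ for some }x\in A\}$, $A{\downarrow}=\{y: y\le x\text{ for some }x\in A\}$. For maximal antichains $A,B$ write $A\sqsubseteq B$ if $A\subseteq B{\downarrow}$, and $A\sqsubset B$ if also $A\ne B$. For disjoint antichains $A\sqsubset B$, $(A,B,<)$ is the bipartite graph with classes $A,B$ and edges $(a<b)$ for $a\in A,b\in B$, $a<b$; it is regular if every edge lies in a perfect matching. A regular poset $(P,\le,A_1\ldots A_k)$: $A_1,\dots,A_k$ are maximum antichains partitioning $P$, $(\{A_1,\dots,A_k\},\sqsubseteq)$ is a linear order with minimum $A_1$ and maximum $A_2$, $a<b$ for all $a\in A_1,b\in A_2$, and for every $t\in[2,k]$ and every $A_p\sqsubset A_s$ consecutive in $(\{A_1,\dots,A_t\},\sqsubseteq)$ the graph $(A_p,A_s,<)$ is regular. A node is a bipartite graph $(X,Y,<)$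 where, for some such consecutive pair $A_p\sqsubset A_s$ (at some stage $t$), $X\subseteq A_p$, $Y\subseteq A_s$ and $X\cup Y$ is the vertex set of a connected component of $(A_p,A_s,<)$; $\mathrm{Int}(X,Y,<)=X{\uparrow}\cap Y{\downarrow}$. Node tree $(\mathcal{N},\prec)$: $\mathcal{N}$ is the set of all nodes; when for $t\ge3$ the antichain $A_t$ is inserted between $A_p\sqsubset A_s$ consecutive at stage $t-1$, each node $M$ of $(A_p,A_t,<)$ or $(A_t,A_s,<)$ is a child of the unique node $N$ of $(A_p,A_s,<)$ with $\mathrm{Int}(M)\subset\mathrm{Int}(N)$; this is a rooted tree with root $(A_1,A_2,<)$. A set $\mathcal{F}\subseteq\mathcal{N}$ is ancestor-free if no node of $\mathcal{F}$ is a descendant of another node of $\mathcal{F}$. *)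

theory Defs
  imports Main
begin

definition poset :: "'a set \<Rightarrow> ('a \<Rightarrow> 'a \<Rightarrow> bool) \<Rightarrow> bool" where
  "poset P leq \<longleftrightarrow>
     (\<forall>x\<in>P. leq x x) \<and>
     (\<forall>x\<in>P. \<forall>y\<in>P. leq x y \<and> leq y x \<longrightarrow> x = y) \<and>
     (\<forall>x\<in>P. \<forall>y\<in>P. \<forall>z\<in>P. leq x y \<and> leq y z \<longrightarrow> leq x z)"

definition lt :: "('a \<Rightarrow> 'a \<Rightarrow> bool) \<Rightarrow> 'a \<Rightarrow> 'a \<Rightarrow> bool" where
  "lt leq a b \<longleftrightarrow> leq a b \<and> a \<noteq> b"

definition antichain :: "'a set \<Rightarrow> ('a \<Rightarrow> 'a \<Rightarrow> bool) \<Rightarrow> 'a set \<Rightarrow> bool" where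
  "antichain P leq A \<longleftrightarrow> A \<subseteq> P \<and> (\<forall>x\<in>A. \<forall>y\<in>A. x \<noteq> y \<longrightarrow> \<not> leq x y)"

definition chain :: "'a set \<Rightarrow> ('a \<Rightarrow> 'a \<Rightarrow> bool) \<Rightarrow> 'a set \<Rightarrow> bool" where
  "chain P leq C \<longleftrightarrow> C \<subseteq> P \<and> (\<forall>x\<in>C. \<forall>y\<in>C. leq x y \<or> leq y x)"

definition width :: "'a set \<Rightarrow> ('a \<Rightarrow> 'a \<Rightarrow> bool) \<Rightarrow> nat" where
  "width P leq = Max {card A | A. antichain P leq A}"

definition maximum_antichain :: "'a set \<Rightarrow> ('a \<Rightarrow> 'a \<Rightarrow> bool) \<Rightarrow> 'a set \<Rightarrow> bool" where
  "maximum_antichain P leq A \<longleftrightarrow> antichain P leq A \<and> card A = width P leq"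

definition up_set :: "'a set \<Rightarrow> ('a \<Rightarrow> 'a \<Rightarrow> bool) \<Rightarrow> 'a set \<Rightarrow> 'a set" where
  "up_set P leq A = {y\<in>P. \<exists>x\<in>A. leq x y}"

definition down_set :: "'a set \<Rightarrow> ('a \<Rightarrow> 'a \<Rightarrow> bool) \<Rightarrow> 'a set \<Rightarrow> 'a set" where
  "down_set P leq A = {y\<in>P. \<exists>x\<in>A. leq y x}"

definition sqle :: "'a set \<Rightarrow> ('a \<Rightarrow> 'a \<Rightarrow> bool) \<Rightarrow> 'a set \<Rightarrow> 'a set \<Rightarrow> bool" where
  "sqle P leq A B \<longleftrightarrow> A \<subseteq> down_set P leq B"

definition sqlt :: "'a set \<Rightarrow> ('a \<Rightarrow> 'a \<Rightarrow> bool) \<Rightarrow> 'a set \<Rightarrow> 'a set \<Rightarrow> bool" where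
  "sqlt P leq A B \<longleftrightarrow> sqle P leq A B \<and> A \<noteq> B"

definition perfect_matching ::
  "('a \<Rightarrow> 'a \<Rightarrow> bool) \<Rightarrow> 'a set \<Rightarrow> 'a set \<Rightarrow> ('a \<times> 'a) set \<Rightarrow> bool" where
  "perfect_matching leq X Y M \<longleftrightarrow>
     M \<subseteq> {(a, b). a \<in> X \<and> b \<in> Y \<and> lt leq a b} \<and>
     (\<forall>a\<in>X. \<exists>!b. (a, b) \<in> M) \<and>
     (\<forall>b\<in>Y. \<exists>!a. (a, b) \<in> M)"

definition regular_bip :: "('a \<Rightarrow> 'a \<Rightarrow> bool) \<Rightarrow> 'a set \<Rightarrow> 'a set \<Rightarrow> bool" where
  "regular_bip leq A B \<longleftrightarrow>
     (\<forall>a\<in>A. \<forall>b\<in>B. lt leq a b \<longrightarrow> (\<exists>M. perfect_matching leq A B M \<and> (a, b) \<in> M))"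

definition bip_adj :: "('a \<Rightarrow> 'a \<Rightarrow> bool) \<Rightarrow> 'a set \<Rightarrow> 'a set \<Rightarrow> ('a \<times> 'a) set" where
  "bip_adj leq A B =
     {(u, v). (u \<in> A \<and> v \<in> B \<and> lt leq u v) \<or> (v \<in> A \<and> u \<in> B \<and> lt leq v u)}"

definition bip_component :: "('a \<Rightarrow> 'a \<Rightarrow> bool) \<Rightarrow> 'a set \<Rightarrow> 'a set \<Rightarrow> 'a set \<Rightarrow> bool" where
  "bip_component leq A B C \<longleftrightarrow>
     (\<exists>v \<in> A \<union> B. C = (bip_adj leq A B)\<^sup>* `` {v})"

definition consecutive ::
  "'a set \<Rightarrow> ('a \<Rightarrow> 'a \<Rightarrow> bool) \<Rightarrow> (nat \<Rightarrow> 'a set) \<Rightarrow> nat \<Rightarrow> nat \<Rightarrow> nat \<Rightarrow> bool" where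
  "consecutive P leq A t p s \<longleftrightarrow>
     p \<in> {1..t} \<and> s \<in> {1..t} \<and> sqlt P leq (A p) (A s) \<and>
     \<not> (\<exists>q\<in>{1..t}. sqlt P leq (A p) (A q) \<and> sqlt P leq (A q) (A s))"

definition regular_poset ::
  "'a set \<Rightarrow> ('a \<Rightarrow> 'a \<Rightarrow> bool) \<Rightarrow> (nat \<Rightarrow> 'a set) \<Rightarrow> nat \<Rightarrow> bool" where
  "regular_poset P leq A k \<longleftrightarrow>
     finite P \<and> poset P leq \<and> 2 \<le> k \<and>
     (\<forall>i\<in>{1..k}. maximum_antichain P leq (A i)) \<and>
     (\<forall>i\<in>{1..k}. \<forall>j\<in>{1..k}. i \<noteq> j \<longrightarrow> A i \<inter> A j = {}) \<and>
     (\<Union>i\<in>{1..k}. A i) = P \<and>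
     (\<forall>i\<in>{1..k}. \<forall>j\<in>{1..k}. sqle P leq (A i) (A j) \<or> sqle P leq (A j) (A i)) \<and>
     (\<forall>i\<in>{1..k}. sqle P leq (A 1) (A i) \<and> sqle P leq (A i) (A 2)) \<and>
     (\<forall>a\<in>A 1. \<forall>b\<in>A 2. lt leq a b) \<and>
     (\<forall>t\<in>{2..k}. \<forall>p s. consecutive P leq A t p s \<longrightarrow> regular_bip leq (A p) (A s))"

definition is_node ::
  "'a set \<Rightarrow> ('a \<Rightarrow> 'a \<Rightarrow> bool) \<Rightarrow> (nat \<Rightarrow> 'a set) \<Rightarrow> nat \<Rightarrow> 'a set \<times> 'a set \<Rightarrow> bool" where
  "is_node P leq A k N \<longleftrightarrow>
     (\<exists>t p s. t \<in> {2..k} \<and> consecutive P leq A t p s \<and>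
        fst N \<subseteq> A p \<and> snd N \<subseteq> A s \<and> bip_component leq (A p) (A s) (fst N \<union> snd N))"

definition nodes :: "'a set \<Rightarrow> ('a \<Rightarrow> 'a \<Rightarrow> bool) \<Rightarrow> (nat \<Rightarrow> 'a set) \<Rightarrow> nat \<Rightarrow> ('a set \<times> 'a set) set" where
  "nodes P leq A k = {N. is_node P leq A k N}"

definition node_int :: "'a set \<Rightarrow> ('a \<Rightarrow> 'a \<Rightarrow> bool) \<Rightarrow> 'a set \<times> 'a set \<Rightarrow> 'a set" where
  "node_int P leq N = up_set P leq (fst N) \<inter> down_set P leq (snd N)"

(* child relation of the node tree: (M, N) means M is a child of N *)
definition node_child ::
  "'a set \<Rightarrow> ('a \<Rightarrow> 'a \<Rightarrow> bool) \<Rightarrow> (nat \<Rightarrow> 'a set) \<Rightarrow> nat \<Rightarrow> ('a set \<times> 'a set) rel" where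
  "node_child P leq A k =
     {(M, N). \<exists>t p s. t \<in> {3..k} \<and> consecutive P leq A (t - 1) p s \<and>
        sqlt P leq (A p) (A t) \<and> sqlt P leq (A t) (A s) \<and>
        fst N \<subseteq> A p \<and> snd N \<subseteq> A s \<and> bip_component leq (A p) (A s) (fst N \<union> snd N) \<and>
        ((fst M \<subseteq> A p \<and> snd M \<subseteq> A t \<and> bip_component leq (A p) (A t) (fst M \<union> snd M)) \<or>
         (fst M \<subseteq> A t \<and> snd M \<subseteq> A s \<and> bip_component leq (A t) (A s) (fst M \<union> snd M))) \<and>
        node_int P leq M \<subset> node_int P leq N}"

definition node_descendant ::
  "'a set \<Rightarrow> ('a \<Rightarrow> 'a \<Rightarrow> bool) \<Rightarrow> (nat \<Rightarrow> 'a set) \<Rightarrow> nat \<Rightarrow> 'a set \<times> 'a set \<Rightarrow> 'a set \<times> 'a set \<Rightarrow> bool" where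
  "node_descendant P leq A k M N \<longleftrightarrow> (M, N) \<in> (node_child P leq A k)\<^sup>+"

definition ancestor_free ::
  "'a set \<Rightarrow> ('a \<Rightarrow> 'a \<Rightarrow> bool) \<Rightarrow> (nat \<Rightarrow> 'a set) \<Rightarrow> nat \<Rightarrow> ('a set \<times> 'a set) set \<Rightarrow> bool" where
  "ancestor_free P leq A k \<F> \<longleftrightarrow>
     \<F> \<subseteq> nodes P leq A k \<and>
     (\<forall>M\<in>\<F>. \<forall>N\<in>\<F>. \<not> node_descendant P leq A k M N)"

end

theory Submission
  imports Defs
begin

definition mf :: "('a \<times> 'a) set \<Rightarrow> 'a \<Rightarrow> 'a" where
  "mf M a = (THE b. (a, b) \<in> M)"
definition mi :: "('a \<times> 'a) set \<Rightarrow> 'a \<Rightarrow> 'a" where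
  "mi M b = (THE a. (a, b) \<in> M)"

lemma pm_edge:
  assumes "perfect_matching leq X Y M" "(a, b) \<in> M"
  shows "a \<in> X \<and> b \<in> Y \<and> lt leq a b"
  using assms unfolding perfect_matching_def by blast

lemma pm_mf:
  assumes "perfect_matching leq X Y M" "a \<in> X"
  shows "(a, mf M a) \<in> M"
proof -
  have "\<exists>!b. (a, b) \<in> M" using assms unfolding perfect_matching_def by blast
  then show ?thesis unfolding mf_def by (rule theI')
qed

lemma pm_mi:
  assumes "perfect_matching leq X Y M" "b \<in> Y"
  shows "(mi M b, b) \<in> M"
proof -
  have "\<exists>!a. (a, b) \<in> M" using assms unfolding perfect_matching_def by blast
  then show ?thesis unfolding mi_def by (rule theI')
qed

lemma pm_mf_eq:
  assumes "perfect_matching leq X Y M" "(a, b) \<in> M"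
  shows "mf M a = b"
proof -
  have "a \<in> X" using pm_edge[OF assms] by blast
  then have "\<exists>!b. (a, b) \<in> M" using assms unfolding perfect_matching_def by blast
  then show ?thesis unfolding mf_def using assms(2) by (rule the1_equality)
qed

lemma pm_mi_eq:
  assumes "perfect_matching leq X Y M" "(a, b) \<in> M"
  shows "mi M b = a"
proof -
  have "b \<in> Y" using pm_edge[OF assms] by blast
  then have "\<exists>!a. (a, b) \<in> M" using assms unfolding perfect_matching_def by blast
  then show ?thesis unfolding mi_def using assms(2) by (rule the1_equality)
qed

lemma pm_combine:
  assumes pm0: "perfect_matching leq X Y M0"
    and sub: "\<forall>G\<in>S. fst G \<subseteq> X \<and> snd G \<subseteq> Y"
    and closed: "\<forall>G\<in>S. \<forall>(a, b)\<in>M0. a \<in> fst G \<longleftrightarrow> b \<in> snd G"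
    and dj: "\<forall>G\<in>S. \<forall>G'\<in>S. G \<noteq> G' \<longrightarrow> fst G \<inter> fst G' = {} \<and> snd G \<inter> snd G' = {}"
    and pms: "\<forall>G\<in>S. perfect_matching leq (fst G) (snd G) (Mf G)"
  shows "perfect_matching leq X Y ((\<Union>G\<in>S. Mf G) \<union> {(a, b). (a, b) \<in> M0 \<and> (\<forall>G\<in>S. a \<notin> fst G)})"
    (is "perfect_matching leq X Y ?M")
proof -
  have s1: "?M \<subseteq> {(a, b). a \<in> X \<and> b \<in> Y \<and> lt leq a b}"
  proof
    fix e assume "e \<in> ?M"
    then obtain a b where e: "e = (a, b)" by (cases e)
    show "e \<in> {(a, b). a \<in> X \<and> b \<in> Y \<and> lt leq a b}"
    proof (cases "(a, b) \<in> M0")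
      case True then show ?thesis using pm_edge[OF pm0] e by blast
    next
      case False
      then obtain G where "G \<in> S" "(a, b) \<in> Mf G" using \<open>e \<in> ?M\<close> e by blast
      then show ?thesis using pm_edge[of leq "fst G" "snd G" "Mf G" a b] pms sub e by blast
    qed
  qed
  have s2: "\<exists>!b. (a, b) \<in> ?M" if a: "a \<in> X" for a
  proof (cases "\<exists>G\<in>S. a \<in> fst G")
    case True
    then obtain G where G: "G \<in> S" "a \<in> fst G" by blast
    then have ex: "\<exists>!b. (a, b) \<in> Mf G" using pms unfolding perfect_matching_def by blast
    then obtain b where b: "(a, b) \<in> Mf G" by blast
    show ?thesis
    proof (rule ex1I[of _ b])
      show "(a, b) \<in> ?M" using b G by blast
    next
      fix b' assume "(a, b') \<in> ?M"
      then consider "(a, b') \<in> M0 \<and> (\<forall>G\<in>S. a \<notin> fst G)" | G' where "G' \<in> S" "(a, b') \<in> Mf G'"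
        by blast
      then show "b' = b"
      proof cases
        case 1 then show ?thesis using G by blast
      next
        case 2
        then have "a \<in> fst G'" using pm_edge[of leq "fst G'" "snd G'" "Mf G'" a b'] pms by blast
        then have "G' = G" using dj G 2 by blast
        then show ?thesis using ex b 2 by blast
      qed
    qed
  next
    case False
    have ex: "\<exists>!b. (a, b) \<in> M0" using pm0 a unfolding perfect_matching_def by blast
    then obtain b where b: "(a, b) \<in> M0" by blast
    show ?thesis
    proof (rule ex1I[of _ b])
      show "(a, b) \<in> ?M" using b False by blast
    next
      fix b' assume "(a, b') \<in> ?M"
      then consider "(a, b') \<in> M0" | G' where "G' \<in> S" "(a, b') \<in> Mf G'"
        by blast
      then show "b' = b"
      proof cases
        case 1 then show ?thesis using ex b by blast
      next
        case 2
        then have "a \<in> fst G'" using pm_edge[of leq "fst G'" "snd G'" "Mf G'" a b'] pms by blast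
        then show ?thesis using False 2 by blast
      qed
    qed
  qed
  have s3: "\<exists>!a. (a, b) \<in> ?M" if b: "b \<in> Y" for b
  proof (cases "\<exists>G\<in>S. b \<in> snd G")
    case True
    then obtain G where G: "G \<in> S" "b \<in> snd G" by blast
    then have ex: "\<exists>!a. (a, b) \<in> Mf G" using pms unfolding perfect_matching_def by blast
    then obtain a where a: "(a, b) \<in> Mf G" by blast
    show ?thesis
    proof (rule ex1I[of _ a])
      show "(a, b) \<in> ?M" using a G by blast
    next
      fix a' assume "(a', b) \<in> ?M"
      then consider "(a', b) \<in> M0 \<and> (\<forall>G\<in>S. a' \<notin> fst G)" | G' where "G' \<in> S" "(a', b) \<in> Mf G'"
        by blast
      then show "a' = a"
      proof cases
        case 1
        then have "a' \<in> fst G" using closed G by blast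
        then show ?thesis using 1 G by blast
      next
        case 2
        then have "b \<in> snd G'" using pm_edge[of leq "fst G'" "snd G'" "Mf G'" a' b] pms by blast
        then have "G' = G" using dj G 2 by blast
        then show ?thesis using ex a 2 by blast
      qed
    qed
  next
    case False
    have ex: "\<exists>!a. (a, b) \<in> M0" using pm0 b unfolding perfect_matching_def by blast
    then obtain a where a: "(a, b) \<in> M0" by blast
    have "\<forall>G\<in>S. a \<notin> fst G" using closed a False by blast
    then show ?thesis
    proof (intro ex1I[of _ a])
      show "(a, b) \<in> ?M" using a \<open>\<forall>G\<in>S. a \<notin> fst G\<close> by blast
    next
      fix a' assume "(a', b) \<in> ?M"
      then consider "(a', b) \<in> M0" | G' where "G' \<in> S" "(a', b) \<in> Mf G'"
        by blast
      then show "a' = a"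
      proof cases
        case 1 then show ?thesis using ex a by blast
      next
        case 2
        then have "b \<in> snd G'" using pm_edge[of leq "fst G'" "snd G'" "Mf G'" a' b] pms by blast
        then show ?thesis using False 2 by blast
      qed
    qed
  qed
  show ?thesis unfolding perfect_matching_def
    apply (intro conjI ballI)
      apply (rule s1)
     apply (erule s2)
    apply (erule s3)
    done
qed

lemma bip_adj_sym: "sym (bip_adj leq X Y)"
  unfolding bip_adj_def sym_def by auto

lemma comp_of:
  assumes "v \<in> X \<union> Y"
  shows "bip_component leq X Y ((bip_adj leq X Y)\<^sup>* `` {v})"
  unfolding bip_component_def using assms by (intro bexI[of _ v]) auto

lemma comp_closed:
  assumes "bip_component leq X Y C" "u \<in> C" "(u, v) \<in> bip_adj leq X Y"
  shows "v \<in> C"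
proof -
  obtain w where w: "C = (bip_adj leq X Y)\<^sup>* `` {w}" using assms(1) unfolding bip_component_def by blast
  then have "(w, u) \<in> (bip_adj leq X Y)\<^sup>*" using assms(2) by simp
  then have "(w, v) \<in> (bip_adj leq X Y)\<^sup>*" using assms(3) by (rule rtrancl_into_rtrancl)
  then show ?thesis using w by simp
qed

lemma comp_closed':
  assumes "bip_component leq X Y C" "u \<in> C" "(v, u) \<in> bip_adj leq X Y"
  shows "v \<in> C"
proof -
  have "(u, v) \<in> bip_adj leq X Y" using assms(3) bip_adj_sym[of leq X Y] unfolding sym_def by simp
  then show ?thesis using comp_closed assms(1,2) by metis
qed

lemma comp_eq:
  assumes "bip_component leq X Y C" "u \<in> C"
  shows "C = (bip_adj leq X Y)\<^sup>* `` {u}"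
proof -
  let ?R = "bip_adj leq X Y"
  obtain v where v: "C = ?R\<^sup>* `` {v}" using assms unfolding bip_component_def by blast
  have s: "sym (?R\<^sup>*)" using bip_adj_sym sym_rtrancl by metis
  have vu: "(v, u) \<in> ?R\<^sup>*" using assms v by simp
  then have uv: "(u, v) \<in> ?R\<^sup>*" using s unfolding sym_def by simp
  show ?thesis
  proof (rule set_eqI)
    fix x
    have "(v, x) \<in> ?R\<^sup>* \<longleftrightarrow> (u, x) \<in> ?R\<^sup>*"
      using vu uv rtrancl_trans by metis
    then show "x \<in> C \<longleftrightarrow> x \<in> ?R\<^sup>* `` {u}" using v by simp
  qed
qed

lemma comp_sub:
  assumes "bip_component leq X Y C"
  shows "C \<subseteq> X \<union> Y"
proof -
  let ?R = "bip_adj leq X Y"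
  obtain v where v: "v \<in> X \<union> Y" "C = ?R\<^sup>* `` {v}" using assms unfolding bip_component_def by blast
  have "u \<in> X \<union> Y" if "(v, u) \<in> ?R\<^sup>*" for u
    using that v(1) by (induction rule: rtrancl_induct) (auto simp: bip_adj_def)
  then show ?thesis using v by auto
qed

lemma comp_self:
  shows "v \<in> (bip_adj leq X Y)\<^sup>* `` {v}"
  by simp

lemma comp_same:
  assumes "bip_component leq X Y C" "bip_component leq X Y C'" "u \<in> C" "u \<in> C'"
  shows "C = C'"
  using comp_eq[OF assms(1,3)] comp_eq[OF assms(2,4)] by simp

lemma comp_edge_iff:
  assumes "bip_component leq X Y (fst G \<union> snd G)" "fst G \<subseteq> X" "snd G \<subseteq> Y" "X \<inter> Y = {}"
    "a \<in> X" "b \<in> Y" "lt leq a b"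
  shows "a \<in> fst G \<longleftrightarrow> b \<in> snd G"
proof -
  have e: "(a, b) \<in> bip_adj leq X Y" using assms(5-7) unfolding bip_adj_def by simp
  show ?thesis
  proof
    assume "a \<in> fst G"
    then have "b \<in> fst G \<union> snd G" using comp_closed[OF assms(1) _ e] by simp
    then show "b \<in> snd G" using assms(2,4,6) by blast
  next
    assume "b \<in> snd G"
    then have "a \<in> fst G \<union> snd G" using comp_closed'[OF assms(1) _ e] by simp
    then show "a \<in> fst G" using assms(3,4,5) by blast
  qed
qed

lemma comp_nodes_disj:
  assumes "bip_component leq X Y (fst G \<union> snd G)" "fst G \<subseteq> X" "snd G \<subseteq> Y"
    "bip_component leq X Y (fst G' \<union> snd G')" "fst G' \<subseteq> X" "snd G' \<subseteq> Y"
    "X \<inter> Y = {}" "G \<noteq> G'"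
  shows "fst G \<inter> fst G' = {} \<and> snd G \<inter> snd G' = {}"
proof (rule ccontr)
  assume "\<not> ?thesis"
  then obtain u where "u \<in> fst G \<union> snd G" "u \<in> fst G' \<union> snd G'" by blast
  then have eq: "fst G \<union> snd G = fst G' \<union> snd G'" using comp_same assms(1,4) by metis
  have "fst G = (fst G \<union> snd G) \<inter> X" "fst G' = (fst G' \<union> snd G') \<inter> X"
    "snd G = (fst G \<union> snd G) \<inter> Y" "snd G' = (fst G' \<union> snd G') \<inter> Y" using assms(2,3,5,6,7) by blast+
  then have "fst G = fst G'" "snd G = snd G'" using eq by metis+
  then show False using assms(8) by (simp add: prod_eq_iff)
qed

lemma combine_comps:
  assumes pm0: "perfect_matching leq X Y M0" and dXY: "X \<inter> Y = {}"
    and S: "\<forall>G\<in>S. fst G \<subseteq> X \<and> snd G \<subseteq> Y \<and> bip_component leq X Y (fst G \<union> snd G)"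
    and pms: "\<forall>G\<in>S. perfect_matching leq (fst G) (snd G) (Mf G)"
  shows "perfect_matching leq X Y ((\<Union>G\<in>S. Mf G) \<union> {(a, b). (a, b) \<in> M0 \<and> (\<forall>G\<in>S. a \<notin> fst G)})"
proof (rule pm_combine[OF pm0])
  show "\<forall>G\<in>S. fst G \<subseteq> X \<and> snd G \<subseteq> Y" using S by blast
  show "\<forall>G\<in>S. \<forall>(a, b)\<in>M0. a \<in> fst G \<longleftrightarrow> b \<in> snd G"
  proof (intro ballI)
    fix G x assume G: "G \<in> S" and x: "x \<in> M0"
    obtain a b where ab: "x = (a, b)" by (cases x)
    have e: "a \<in> X" "b \<in> Y" "lt leq a b" using pm_edge[OF pm0] x ab by auto
    have g: "fst G \<subseteq> X" "snd G \<subseteq> Y" "bip_component leq X Y (fst G \<union> snd G)" using S G by auto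
    have "a \<in> fst G \<longleftrightarrow> b \<in> snd G" using comp_edge_iff[OF g(3) g(1) g(2) dXY e] .
    then show "case x of (a, b) \<Rightarrow> a \<in> fst G \<longleftrightarrow> b \<in> snd G" using ab by simp
  qed
  show "\<forall>G\<in>S. \<forall>G'\<in>S. G \<noteq> G' \<longrightarrow> fst G \<inter> fst G' = {} \<and> snd G \<inter> snd G' = {}"
  proof (intro ballI impI)
    fix G G' assume G: "G \<in> S" "G' \<in> S" "G \<noteq> G'"
    have g: "fst G \<subseteq> X" "snd G \<subseteq> Y" "bip_component leq X Y (fst G \<union> snd G)" using S G by auto
    have g': "fst G' \<subseteq> X" "snd G' \<subseteq> Y" "bip_component leq X Y (fst G' \<union> snd G')" using S G by auto
    show "fst G \<inter> fst G' = {} \<and> snd G \<inter> snd G' = {}"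
      using comp_nodes_disj[OF g(3) g(1) g(2) g'(3) g'(1) g'(2) dXY G(3)] .
  qed
  show "\<forall>G\<in>S. perfect_matching leq (fst G) (snd G) (Mf G)" using pms .
qed

locale RP =
  fixes P :: "'a set" and leq :: "'a \<Rightarrow> 'a \<Rightarrow> bool" and A :: "nat \<Rightarrow> 'a set" and k :: nat
  assumes reg: "regular_poset P leq A k" and ne1: "A 1 \<noteq> {}"
begin

lemma finP: "finite P" using reg unfolding regular_poset_def by blast
lemma k2: "2 \<le> k" using reg unfolding regular_poset_def by blast
lemma refl: "x \<in> P \<Longrightarrow> leq x x" using reg unfolding regular_poset_def poset_def by blast
lemma asym: "x \<in> P \<Longrightarrow> y \<in> P \<Longrightarrow> leq x y \<Longrightarrow> leq y x \<Longrightarrow> x = y"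
  using reg unfolding regular_poset_def poset_def by blast
lemma trans: "x \<in> P \<Longrightarrow> y \<in> P \<Longrightarrow> z \<in> P \<Longrightarrow> leq x y \<Longrightarrow> leq y z \<Longrightarrow> leq x z"
  using reg unfolding regular_poset_def poset_def by blast
lemma maxA: "i \<in> {1..k} \<Longrightarrow> maximum_antichain P leq (A i)"
  using reg unfolding regular_poset_def by blast
lemma AP: "i \<in> {1..k} \<Longrightarrow> A i \<subseteq> P"
  using maxA unfolding maximum_antichain_def antichain_def by blast
lemma anti: "i \<in> {1..k} \<Longrightarrow> x \<in> A i \<Longrightarrow> y \<in> A i \<Longrightarrow> leq x y \<Longrightarrow> x = y"
  using maxA unfolding maximum_antichain_def antichain_def by blast
lemma cardA: "i \<in> {1..k} \<Longrightarrow> card (A i) = width P leq"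
  using maxA unfolding maximum_antichain_def by blast
lemma finA: "i \<in> {1..k} \<Longrightarrow> finite (A i)"
  using AP finP finite_subset by blast
lemma one_in: "(1::nat) \<in> {1..k}" using k2 by simp
lemma two_in: "(2::nat) \<in> {1..k}" using k2 by simp
lemma wpos: "width P leq > 0"
proof -
  have "card (A 1) > 0" using finA[OF one_in] ne1 by (simp add: card_gt_0_iff)
  then show ?thesis using cardA[OF one_in] by simp
qed
lemma Ane: "i \<in> {1..k} \<Longrightarrow> A i \<noteq> {}"
  using cardA wpos by fastforce
lemma disj: "i \<in> {1..k} \<Longrightarrow> j \<in> {1..k} \<Longrightarrow> i \<noteq> j \<Longrightarrow> A i \<inter> A j = {}"
  using reg unfolding regular_poset_def by blast
lemma disjD: "i \<in> {1..k} \<Longrightarrow> j \<in> {1..k} \<Longrightarrow> x \<in> A i \<Longrightarrow> x \<in> A j \<Longrightarrow> i = j"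
  using disj by blast
lemma Ainj: "i \<in> {1..k} \<Longrightarrow> j \<in> {1..k} \<Longrightarrow> A i = A j \<Longrightarrow> i = j"
  using disj Ane by blast
lemma Pcov: "x \<in> P \<Longrightarrow> \<exists>i\<in>{1..k}. x \<in> A i"
  using reg unfolding regular_poset_def by blast
lemma lin: "i \<in> {1..k} \<Longrightarrow> j \<in> {1..k} \<Longrightarrow> sqle P leq (A i) (A j) \<or> sqle P leq (A j) (A i)"
  using reg unfolding regular_poset_def by blast
lemma first: "i \<in> {1..k} \<Longrightarrow> sqle P leq (A 1) (A i)"
  using reg unfolding regular_poset_def by blast
lemma last: "i \<in> {1..k} \<Longrightarrow> sqle P leq (A i) (A 2)"
  using reg unfolding regular_poset_def by blast
lemma A12: "a \<in> A 1 \<Longrightarrow> b \<in> A 2 \<Longrightarrow> lt leq a b"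
  using reg unfolding regular_poset_def by blast
lemma regb: "t \<in> {2..k} \<Longrightarrow> consecutive P leq A t p s \<Longrightarrow> regular_bip leq (A p) (A s)"
  using reg unfolding regular_poset_def by blast

lemma sqleD: "sqle P leq X Y \<Longrightarrow> x \<in> X \<Longrightarrow> \<exists>y\<in>Y. leq x y"
  unfolding sqle_def down_set_def by blast

lemma sqleI: "X \<subseteq> P \<Longrightarrow> (\<And>x. x \<in> X \<Longrightarrow> \<exists>y\<in>Y. leq x y) \<Longrightarrow> sqle P leq X Y"
  unfolding sqle_def down_set_def by blast

lemma sqle_trans:
  assumes "i \<in> {1..k}" "j \<in> {1..k}" "l \<in> {1..k}"
    "sqle P leq (A i) (A j)" "sqle P leq (A j) (A l)"
  shows "sqle P leq (A i) (A l)"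
proof (rule sqleI)
  show "A i \<subseteq> P" using AP assms by blast
  fix x assume x: "x \<in> A i"
  obtain y where y: "y \<in> A j" "leq x y" using sqleD assms(4) x by blast
  obtain z where z: "z \<in> A l" "leq y z" using sqleD assms(5) y by blast
  have "leq x z" using trans[of x y z] x y z AP assms by blast
  then show "\<exists>z\<in>A l. leq x z" using z by blast
qed

lemma sqle_antisym:
  assumes "i \<in> {1..k}" "j \<in> {1..k}" "sqle P leq (A i) (A j)" "sqle P leq (A j) (A i)"
  shows "i = j"
proof (rule ccontr)
  assume ne: "i \<noteq> j"
  obtain x where x: "x \<in> A i" using Ane assms by blast
  obtain y where y: "y \<in> A j" "leq x y" using sqleD assms(3) x by blast
  obtain x' where x': "x' \<in> A i" "leq y x'" using sqleD assms(4) y by blast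
  have P: "x \<in> P" "y \<in> P" "x' \<in> P" using AP assms x y x' by blast+
  have "leq x x'" using trans P x y x' by blast
  then have "x = x'" using anti assms x x' by blast
  then have "x = y" using asym P y x' by blast
  then show False using disj[OF assms(1,2) ne] x y by blast
qed

lemma sqlt_iff: "i \<in> {1..k} \<Longrightarrow> j \<in> {1..k} \<Longrightarrow> sqlt P leq (A i) (A j) \<longleftrightarrow> sqle P leq (A i) (A j) \<and> i \<noteq> j"
  unfolding sqlt_def using Ainj by blast

lemma sqlt_trans:
  assumes "i \<in> {1..k}" "j \<in> {1..k}" "l \<in> {1..k}"
    "sqlt P leq (A i) (A j)" "sqlt P leq (A j) (A l)"
  shows "sqlt P leq (A i) (A l)"
proof -
  have a: "sqle P leq (A i) (A j)" "i \<noteq> j" "sqle P leq (A j) (A l)" "j \<noteq> l"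
    using assms sqlt_iff by blast+
  have b: "sqle P leq (A i) (A l)" using sqle_trans a assms by blast
  have "i \<noteq> l"
  proof
    assume "i = l"
    then have "i = j" using sqle_antisym[of i j] a assms by blast
    then show False using a by blast
  qed
  then show ?thesis using sqlt_iff assms b by blast
qed

lemma lin_lt: "i \<in> {1..k} \<Longrightarrow> j \<in> {1..k} \<Longrightarrow> i \<noteq> j \<Longrightarrow> sqlt P leq (A i) (A j) \<or> sqlt P leq (A j) (A i)"
  using lin sqlt_iff by metis

lemma sqlt_asym: "i \<in> {1..k} \<Longrightarrow> j \<in> {1..k} \<Longrightarrow> sqlt P leq (A i) (A j) \<Longrightarrow> \<not> sqlt P leq (A j) (A i)"
  using sqlt_iff sqle_antisym by metis

lemma sqlt_irr: "\<not> sqlt P leq X X" unfolding sqlt_def by simp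

lemma lt_trans: "x \<in> P \<Longrightarrow> y \<in> P \<Longrightarrow> z \<in> P \<Longrightarrow> lt leq x y \<Longrightarrow> lt leq y z \<Longrightarrow> lt leq x z"
  unfolding lt_def using trans asym by metis

lemma cons_idx:
  assumes "consecutive P leq A t p s" "t \<le> k"
  shows "p \<in> {1..t}" "s \<in> {1..t}" "p \<in> {1..k}" "s \<in> {1..k}" "sqlt P leq (A p) (A s)" "p \<noteq> s"
  using assms unfolding consecutive_def sqlt_def by auto

lemma lt_above:
  assumes "i \<in> {1..k}" "j \<in> {1..k}" "sqlt P leq (A i) (A j)" "a \<in> A i"
  shows "\<exists>b\<in>A j. lt leq a b"
proof -
  obtain b where b: "b \<in> A j" "leq a b" using sqleD assms unfolding sqlt_def by blast
  have "i \<noteq> j" using assms sqlt_iff by blast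
  then have "a \<noteq> b" using disj assms b by blast
  then show ?thesis using b unfolding lt_def by blast
qed

lemma pm_exists:
  assumes "t \<in> {2..k}" "consecutive P leq A t p s"
  shows "\<exists>M. perfect_matching leq (A p) (A s) M"
proof -
  have idx: "p \<in> {1..k}" "s \<in> {1..k}" "sqlt P leq (A p) (A s)" using cons_idx assms by auto
  obtain a where a: "a \<in> A p" using Ane idx by blast
  obtain b where b: "b \<in> A s" "lt leq a b" using lt_above idx a by blast
  show ?thesis using regb[OF assms] a b unfolding regular_bip_def by blast
qed

end

context RP begin

definition dc :: "nat \<Rightarrow> nat" where "dc i = card (down_set P leq (A i))"

lemma dc_le: "dc i \<le> card P"
  unfolding dc_def down_set_def using finP by (intro card_mono) auto

lemma dc_mono:
  assumes "i \<in> {1..k}" "j \<in> {1..k}" "sqlt P leq (A i) (A j)"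
  shows "dc i < dc j"
proof -
  have ij: "sqle P leq (A i) (A j)" "i \<noteq> j" using assms sqlt_iff by blast+
  have sub: "down_set P leq (A i) \<subseteq> down_set P leq (A j)"
  proof
    fix x assume "x \<in> down_set P leq (A i)"
    then obtain y where y: "x \<in> P" "y \<in> A i" "leq x y" unfolding down_set_def by blast
    obtain z where z: "z \<in> A j" "leq y z" using sqleD ij y by blast
    have "leq x z" using trans[of x y z] y z AP assms by blast
    then show "x \<in> down_set P leq (A j)" using y z unfolding down_set_def by blast
  qed
  have "A j \<subseteq> down_set P leq (A j)" using AP[OF assms(2)] refl unfolding down_set_def by blast
  moreover have "\<not> A j \<subseteq> down_set P leq (A i)"
  proof
    assume "A j \<subseteq> down_set P leq (A i)"
    then have "sqle P leq (A j) (A i)" unfolding sqle_def by blast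
    then show False using sqle_antisym assms ij by blast
  qed
  ultimately have "down_set P leq (A i) \<subset> down_set P leq (A j)" using sub by blast
  moreover have "finite (down_set P leq (A j))" using finP unfolding down_set_def by simp
  ultimately show ?thesis unfolding dc_def by (rule psubset_card_mono[rotated])
qed

lemma insert_point:
  assumes t: "t \<in> {3..k}"
  shows "\<exists>p s. consecutive P leq A (t - 1) p s \<and> sqlt P leq (A p) (A t) \<and> sqlt P leq (A t) (A s)"
proof -
  have tk: "t \<in> {1..k}" using t by simp
  define L where "L = {i. i \<in> {1..t-1} \<and> sqlt P leq (A i) (A t)}"
  define R where "R = {i. i \<in> {1..t-1} \<and> sqlt P leq (A t) (A i)}"
  have "1 \<in> L" unfolding L_def using t first[OF tk] sqlt_iff[OF one_in tk] by auto
  then obtain p where p: "p \<in> L" "\<forall>y. y \<in> L \<longrightarrow> card P - dc p \<le> card P - dc y"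
    using ex_has_least_nat[of "\<lambda>i. i \<in> L" 1 "\<lambda>i. card P - dc i"] by blast
  have pmax: "dc y \<le> dc p" if "y \<in> L" for y using p that dc_le[of y] dc_le[of p] by fastforce
  have "2 \<in> R" unfolding R_def using t last[OF tk] sqlt_iff[OF tk two_in] by auto
  then obtain s where s: "s \<in> R" "\<forall>y. y \<in> R \<longrightarrow> dc s \<le> dc y"
    using ex_has_least_nat[of "\<lambda>i. i \<in> R" 2 dc] by blast
  have pk: "p \<in> {1..k}" "s \<in> {1..k}" using p s t unfolding L_def R_def by auto
  have ppt: "sqlt P leq (A p) (A t)" and sts: "sqlt P leq (A t) (A s)" using p s unfolding L_def R_def by auto
  have "consecutive P leq A (t - 1) p s"
    unfolding consecutive_def
  proof (intro conjI)
    show "p \<in> {1..t-1}" "s \<in> {1..t-1}" using p s unfolding L_def R_def by auto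
    show "sqlt P leq (A p) (A s)" using sqlt_trans pk tk ppt sts by blast
    show "\<not> (\<exists>q\<in>{1..t - 1}. sqlt P leq (A p) (A q) \<and> sqlt P leq (A q) (A s))"
    proof
      assume "\<exists>q\<in>{1..t - 1}. sqlt P leq (A p) (A q) \<and> sqlt P leq (A q) (A s)"
      then obtain q where q: "q \<in> {1..t-1}" "sqlt P leq (A p) (A q)" "sqlt P leq (A q) (A s)" by blast
      have qk: "q \<in> {1..k}" "q \<noteq> t" using q t by auto
      from lin_lt[OF qk(1) tk qk(2)] show False
      proof
        assume "sqlt P leq (A q) (A t)"
        then have "q \<in> L" using q unfolding L_def by blast
        then show False using pmax dc_mono[OF pk(1) qk(1) q(2)] by fastforce
      next
        assume "sqlt P leq (A t) (A q)"
        then have "q \<in> R" using q unfolding R_def by blast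
        then show False using s dc_mono[OF qk(1) pk(2) q(3)] by fastforce
      qed
    qed
  qed
  then show ?thesis using ppt sts by blast
qed

definition nodeat :: "nat \<Rightarrow> 'a set \<times> 'a set \<Rightarrow> bool" where
  "nodeat t N \<longleftrightarrow>
     (\<exists>t' p s. t' \<in> {2..t} \<and> consecutive P leq A t' p s \<and>
        fst N \<subseteq> A p \<and> snd N \<subseteq> A s \<and> bip_component leq (A p) (A s) (fst N \<union> snd N))"

definition cstep :: "nat \<Rightarrow> 'a set \<times> 'a set \<Rightarrow> 'a set \<times> 'a set \<Rightarrow> bool" where
  "cstep t' M N \<longleftrightarrow> (\<exists>p s. consecutive P leq A (t' - 1) p s \<and>
        sqlt P leq (A p) (A t') \<and> sqlt P leq (A t') (A s) \<and>
        fst N \<subseteq> A p \<and> snd N \<subseteq> A s \<and> bip_component leq (A p) (A s) (fst N \<union> snd N) \<and>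
        ((fst M \<subseteq> A p \<and> snd M \<subseteq> A t' \<and> bip_component leq (A p) (A t') (fst M \<union> snd M)) \<or>
         (fst M \<subseteq> A t' \<and> snd M \<subseteq> A s \<and> bip_component leq (A t') (A s) (fst M \<union> snd M))) \<and>
        node_int P leq M \<subset> node_int P leq N)"

definition childat :: "nat \<Rightarrow> ('a set \<times> 'a set) rel" where
  "childat t = {(M, N). \<exists>t'\<in>{3..t}. cstep t' M N}"

lemma nodeat_k: "nodeat k N = is_node P leq A k N"
  unfolding nodeat_def is_node_def by simp

lemma childat_k: "childat k = node_child P leq A k"
  unfolding childat_def node_child_def cstep_def by (simp add: Bex_def atLeastAtMost_iff conj_assoc)

lemma childat_mono: "t \<le> t' \<Longrightarrow> childat t \<subseteq> childat t'"
  unfolding childat_def by auto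

lemma childat_mono_trancl: "t \<le> t' \<Longrightarrow> (childat t)\<^sup>+ \<subseteq> (childat t')\<^sup>+"
  using childat_mono trancl_mono by blast

lemma nodeat_elems:
  assumes "nodeat t N" "t \<le> k" "u \<in> fst N \<union> snd N"
  shows "\<exists>j\<in>{1..t}. u \<in> A j"
proof -
  obtain t' p s where tps: "t' \<in> {2..t}" "consecutive P leq A t' p s"
      "fst N \<subseteq> A p" "snd N \<subseteq> A s"
    using assms(1) unfolding nodeat_def by blast
  have "t' \<le> k" using tps assms by simp
  then have "p \<in> {1..t}" "s \<in> {1..t}" using cons_idx[OF tps(2)] tps(1) by auto
  moreover have "u \<in> A p \<or> u \<in> A s" using tps(3,4) assms(3) by blast
  ultimately show ?thesis by blast
qed

definition Q :: "nat \<Rightarrow> bool" where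
  "Q t \<longleftrightarrow> (\<forall>(F :: ('a set \<times> 'a set) set) (M :: 'a set \<times> 'a set \<Rightarrow> ('a \<times> 'a) set).
     F \<subseteq> Collect (nodeat t) \<longrightarrow>
     (\<forall>G\<in>F. \<forall>N\<in>F. (G, N) \<notin> (childat t)\<^sup>+) \<longrightarrow>
     (\<forall>N\<in>F. perfect_matching leq (fst N) (snd N) (M N)) \<longrightarrow>
     (\<exists>C :: nat \<Rightarrow> 'a set.
           (\<forall>i<width P leq. chain P leq (C i)) \<and>
           (\<forall>i<width P leq. \<forall>j<width P leq. i \<noteq> j \<longrightarrow> C i \<inter> C j = {}) \<and>
           (\<Union>i<width P leq. C i) = (\<Union>N\<in>F. fst N \<union> snd N) \<and>
           (\<forall>N\<in>F. \<forall>(a, b)\<in>M N. \<exists>i<width P leq. a \<in> C i \<and> b \<in> C i)))"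

end

context RP begin

lemma sq12: "sqlt P leq (A 1) (A 2)"
  using last[OF one_in] sqlt_iff[OF one_in two_in] by simp

lemma stage2_node:
  assumes "nodeat 2 N"
  shows "N = (A 1, A 2)"
proof -
  obtain t' p s where tps: "t' \<in> {2..2}" "consecutive P leq A t' p s" "fst N \<subseteq> A p" "snd N \<subseteq> A s"
      "bip_component leq (A p) (A s) (fst N \<union> snd N)"
    using assms unfolding nodeat_def by blast
  have t2: "t' = 2" using tps by simp
  have idx: "p \<in> {1..2}" "s \<in> {1..2}" "sqlt P leq (A p) (A s)" "p \<noteq> s"
    using cons_idx[OF tps(2)] t2 k2 by auto
  have ps: "p = 1 \<and> s = 2"
  proof (rule ccontr)
    assume "\<not> (p = 1 \<and> s = 2)"
    then have "p = 2" "s = 1" using idx by auto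
    then show False using idx(3) sqlt_asym[OF one_in two_in sq12] by simp
  qed
  let ?R = "bip_adj leq (A 1) (A 2)"
  let ?C = "fst N \<union> snd N"
  have comp: "bip_component leq (A 1) (A 2) ?C" using tps ps by simp
  have d12: "A 1 \<inter> A 2 = {}" using disj[OF one_in two_in] by simp
  have e1: "(a, b) \<in> ?R" if "a \<in> A 1" "b \<in> A 2" for a b
    using that A12 unfolding bip_adj_def by blast
  have e2: "(b, a) \<in> ?R" if "a \<in> A 1" "b \<in> A 2" for a b
    using that A12 unfolding bip_adj_def by blast
  obtain a0 where a0: "a0 \<in> A 1" using Ane[OF one_in] by blast
  obtain b0 where b0: "b0 \<in> A 2" using Ane[OF two_in] by blast
  obtain v where v: "v \<in> A 1 \<union> A 2" "?C = ?R\<^sup>* `` {v}" using comp unfolding bip_component_def by blast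
  have vC: "v \<in> ?C" using v(2) by simp
  have a0C: "a0 \<in> ?C"
  proof (cases "v \<in> A 1")
    case True
    then have "b0 \<in> ?C" using comp_closed[OF comp vC e1[OF True b0]] by simp
    then show ?thesis using comp_closed[OF comp _ e2[OF a0 b0]] by simp
  next
    case False
    then have "v \<in> A 2" using v by blast
    then show ?thesis using comp_closed[OF comp vC e2[OF a0]] by simp
  qed
  have b0C: "b0 \<in> ?C" using comp_closed[OF comp a0C e1[OF a0 b0]] by simp
  have A2C: "A 2 \<subseteq> ?C" using comp_closed[OF comp a0C e1[OF a0]] by blast
  have A1C: "A 1 \<subseteq> ?C" using comp_closed[OF comp b0C e2[OF _ b0]] by blast
  have "fst N = A 1" using A1C tps(3) ps d12 A2C tps(4) by blast
  moreover have "snd N = A 2" using A1C tps(3) ps d12 A2C tps(4) by blast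
  ultimately show ?thesis by (simp add: prod_eq_iff)
qed

lemma base: "Q 2"
  unfolding Q_def
proof (intro allI impI)
  fix F :: "('a set \<times> 'a set) set" and M :: "'a set \<times> 'a set \<Rightarrow> ('a \<times> 'a) set"
  assume Fs: "F \<subseteq> Collect (nodeat 2)"
    and pm: "\<forall>N\<in>F. perfect_matching leq (fst N) (snd N) (M N)"
  let ?w = "width P leq"
  have Fsub: "F \<subseteq> {(A 1, A 2)}" using Fs stage2_node by blast
  show "\<exists>C :: nat \<Rightarrow> 'a set.
           (\<forall>i<?w. chain P leq (C i)) \<and>
           (\<forall>i<?w. \<forall>j<?w. i \<noteq> j \<longrightarrow> C i \<inter> C j = {}) \<and>
           (\<Union>i<?w. C i) = (\<Union>N\<in>F. fst N \<union> snd N) \<and>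
           (\<forall>N\<in>F. \<forall>(a, b)\<in>M N. \<exists>i<?w. a \<in> C i \<and> b \<in> C i)"
  proof (cases "F = {}")
    case True
    show ?thesis
      by (rule exI[of _ "\<lambda>_. {}"]) (simp add: True chain_def)
  next
    case False
    then have F: "F = {(A 1, A 2)}" using Fsub by blast
    define M0 where "M0 = M (A 1, A 2)"
    have pm0: "perfect_matching leq (A 1) (A 2) M0" using pm F unfolding M0_def by simp
    obtain f where f: "bij_betw f {0..<card (A 1)} (A 1)"
      using ex_bij_betw_nat_finite[OF finA[OF one_in]] by blast
    have cw: "card (A 1) = ?w" using cardA[OF one_in] .
    have fA: "f i \<in> A 1" if "i < ?w" for i using f that cw unfolding bij_betw_def by auto
    have finj: "f i = f j \<Longrightarrow> i < ?w \<Longrightarrow> j < ?w \<Longrightarrow> i = j" for i j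
      using f cw unfolding bij_betw_def inj_on_def by auto
    have fsurj: "\<exists>i<?w. a = f i" if "a \<in> A 1" for a
      using f cw that unfolding bij_betw_def by (metis atLeastLessThan_iff imageE zero_le)
    have d12: "A 1 \<inter> A 2 = {}" using disj[OF one_in two_in] by simp
    define C where "C i = {f i, mf M0 (f i)}" for i
    have edge: "(f i, mf M0 (f i)) \<in> M0" if "i < ?w" for i using pm_mf[OF pm0 fA[OF that]] .
    have eprops: "f i \<in> A 1 \<and> mf M0 (f i) \<in> A 2 \<and> lt leq (f i) (mf M0 (f i))" if "i < ?w" for i
      using pm_edge[OF pm0 edge[OF that]] .
    show ?thesis
    proof (rule exI[of _ C], intro conjI allI impI)
      fix i assume i: "i < ?w"
      have P: "f i \<in> P" "mf M0 (f i) \<in> P" using eprops[OF i] AP one_in two_in by blast+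
      have "leq (f i) (mf M0 (f i))" using eprops[OF i] unfolding lt_def by blast
      then show "chain P leq (C i)" unfolding chain_def C_def using P refl by auto
    next
      fix i j assume ij: "i < ?w" "j < ?w" "i \<noteq> j"
      have "f i \<noteq> f j" using finj ij by blast
      moreover have "mf M0 (f i) \<noteq> mf M0 (f j)"
      proof
        assume "mf M0 (f i) = mf M0 (f j)"
        then have "mi M0 (mf M0 (f i)) = mi M0 (mf M0 (f j))" by simp
        then show False
          using pm_mi_eq[OF pm0 edge[OF ij(1)]] pm_mi_eq[OF pm0 edge[OF ij(2)]] \<open>f i \<noteq> f j\<close> by simp
      qed
      moreover have "f i \<noteq> mf M0 (f j)" "f j \<noteq> mf M0 (f i)"
        using eprops[OF ij(1)] eprops[OF ij(2)] d12 by auto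
      ultimately show "C i \<inter> C j = {}" unfolding C_def by auto
    next
      show "(\<Union>i<?w. C i) = (\<Union>N\<in>F. fst N \<union> snd N)"
      proof
        show "(\<Union>i<?w. C i) \<subseteq> (\<Union>N\<in>F. fst N \<union> snd N)"
          using eprops unfolding C_def F by auto
      next
        show "(\<Union>N\<in>F. fst N \<union> snd N) \<subseteq> (\<Union>i<?w. C i)"
        proof
          fix u assume "u \<in> (\<Union>N\<in>F. fst N \<union> snd N)"
          then have "u \<in> A 1 \<or> u \<in> A 2" using F by simp
          then show "u \<in> (\<Union>i<?w. C i)"
          proof
            assume "u \<in> A 1"
            then obtain i where "i < ?w" "u = f i" using fsurj by blast
            then show ?thesis unfolding C_def by auto
          next
            assume u: "u \<in> A 2"
            have e: "(mi M0 u, u) \<in> M0" using pm_mi[OF pm0 u] .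
            then have "mi M0 u \<in> A 1" using pm_edge[OF pm0] by blast
            then obtain i where i: "i < ?w" "mi M0 u = f i" using fsurj by blast
            have "mf M0 (f i) = u" using pm_mf_eq[OF pm0 e] i by simp
            then show ?thesis unfolding C_def using i by auto
          qed
        qed
      qed
    next
      show "\<forall>N\<in>F. \<forall>(a, b)\<in>M N. \<exists>i<?w. a \<in> C i \<and> b \<in> C i"
      proof (intro ballI, clarify)
        fix N a b assume N: "N \<in> F" and ab: "(a, b) \<in> M N"
        have ab0: "(a, b) \<in> M0" using N ab F unfolding M0_def by simp
        then have "a \<in> A 1" using pm_edge[OF pm0] by blast
        then obtain i where i: "i < ?w" "a = f i" using fsurj by blast
        have "mf M0 a = b" using pm_mf_eq[OF pm0 ab0] .
        then show "\<exists>i<?w. a \<in> C i \<and> b \<in> C i" using i unfolding C_def by auto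
      qed
    qed
  qed
qed

end

locale Step = RP +
  fixes t p s :: nat and F :: "('a set \<times> 'a set) set" and M :: "'a set \<times> 'a set \<Rightarrow> ('a \<times> 'a) set"
  assumes t: "t \<in> {3..k}"
    and cons: "consecutive P leq A (t - 1) p s"
    and pt: "sqlt P leq (A p) (A t)" and ts: "sqlt P leq (A t) (A s)"
    and Fs: "F \<subseteq> Collect (nodeat t)"
    and Faf: "\<forall>G\<in>F. \<forall>N\<in>F. (G, N) \<notin> (childat t)\<^sup>+"
    and Fpm: "\<forall>N\<in>F. perfect_matching leq (fst N) (snd N) (M N)"
begin

lemma tk: "t \<in> {1..k}" using t by simp
lemma tk1: "t - 1 \<le> k" using t by auto
lemma pk: "p \<in> {1..k}" using cons_idx[OF cons tk1] by simp
lemma sk: "s \<in> {1..k}" using cons_idx[OF cons tk1] by simp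
lemma pt1: "p \<in> {1..t-1}" using cons_idx[OF cons tk1] by simp
lemma st1: "s \<in> {1..t-1}" using cons_idx[OF cons tk1] by simp
lemma ps: "sqlt P leq (A p) (A s)" using cons_idx[OF cons tk1] by simp
lemma pnt: "p \<noteq> t" using pt1 t by auto
lemma snt: "s \<noteq> t" using st1 t by auto
lemma pns: "p \<noteq> s" using cons_idx[OF cons tk1] by simp
lemma dpt: "A p \<inter> A t = {}" using disj pk tk pnt by blast
lemma dts: "A t \<inter> A s = {}" using disj sk tk snt by blast
lemma dps: "A p \<inter> A s = {}" using disj pk sk pns by blast
lemma Ap: "A p \<subseteq> P" using AP pk by blast
lemma At: "A t \<subseteq> P" using AP tk by blast
lemma As: "A s \<subseteq> P" using AP sk by blast

lemma no_between: "q \<in> {1..t-1} \<Longrightarrow> sqlt P leq (A p) (A q) \<Longrightarrow> sqlt P leq (A q) (A s) \<Longrightarrow> False"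
  using cons unfolding consecutive_def by blast

lemma cpt: "consecutive P leq A t p t"
  unfolding consecutive_def
proof (intro conjI)
  show "p \<in> {1..t}" "t \<in> {1..t}" using pt1 t by auto
  show "sqlt P leq (A p) (A t)" using pt .
  show "\<not> (\<exists>q\<in>{1..t}. sqlt P leq (A p) (A q) \<and> sqlt P leq (A q) (A t))"
  proof
    assume "\<exists>q\<in>{1..t}. sqlt P leq (A p) (A q) \<and> sqlt P leq (A q) (A t)"
    then obtain q where q: "q \<in> {1..t}" "sqlt P leq (A p) (A q)" "sqlt P leq (A q) (A t)" by blast
    have "q \<noteq> t" using q sqlt_irr by blast
    then have q1: "q \<in> {1..t-1}" "q \<in> {1..k}" using q t by auto
    have "sqlt P leq (A q) (A s)" using sqlt_trans[OF q1(2) tk sk q(3) ts] .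
    then show False using no_between q1 q by blast
  qed
qed

lemma cts: "consecutive P leq A t t s"
  unfolding consecutive_def
proof (intro conjI)
  show "t \<in> {1..t}" "s \<in> {1..t}" using st1 t by auto
  show "sqlt P leq (A t) (A s)" using ts .
  show "\<not> (\<exists>q\<in>{1..t}. sqlt P leq (A t) (A q) \<and> sqlt P leq (A q) (A s))"
  proof
    assume "\<exists>q\<in>{1..t}. sqlt P leq (A t) (A q) \<and> sqlt P leq (A q) (A s)"
    then obtain q where q: "q \<in> {1..t}" "sqlt P leq (A t) (A q)" "sqlt P leq (A q) (A s)" by blast
    have "q \<noteq> t" using q sqlt_irr by blast
    then have q1: "q \<in> {1..t-1}" "q \<in> {1..k}" using q t by auto
    have "sqlt P leq (A p) (A q)" using sqlt_trans[OF pk tk q1(2) pt q(2)] .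
    then show False using no_between q1 q by blast
  qed
qed

lemma cons_cases:
  assumes c: "consecutive P leq A t p' s'"
  shows "(p' = t \<longrightarrow> s' = s) \<and> (s' = t \<longrightarrow> p' = p) \<and>
         (p' \<noteq> t \<and> s' \<noteq> t \<longrightarrow> consecutive P leq A (t - 1) p' s')"
proof -
  have tk': "t \<le> k" using t by simp
  have idx: "p' \<in> {1..t}" "s' \<in> {1..t}" "p' \<in> {1..k}" "s' \<in> {1..k}" "sqlt P leq (A p') (A s')" "p' \<noteq> s'"
    using cons_idx[OF c tk'] by auto
  have nq: "q \<in> {1..t} \<Longrightarrow> sqlt P leq (A p') (A q) \<Longrightarrow> sqlt P leq (A q) (A s') \<Longrightarrow> False" for q
    using c unfolding consecutive_def by blast
  have s1: "s \<in> {1..t}" "p \<in> {1..t}" using st1 pt1 t by auto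
  have c1: "p' = t \<longrightarrow> s' = s"
  proof
    assume pt': "p' = t"
    show "s' = s"
    proof (rule ccontr)
      assume ne: "s' \<noteq> s"
      from lin_lt[OF idx(4) sk ne] show False
      proof
        assume a: "sqlt P leq (A s') (A s)"
        have "sqlt P leq (A p) (A s')" using sqlt_trans[OF pk tk idx(4) pt] idx(5) pt' by simp
        moreover have "s' \<in> {1..t-1}" using idx pt' by auto
        ultimately show False using no_between a by blast
      next
        assume a: "sqlt P leq (A s) (A s')"
        then show False using nq[OF s1(1)] ts pt' by simp
      qed
    qed
  qed
  have c2: "s' = t \<longrightarrow> p' = p"
  proof
    assume st': "s' = t"
    show "p' = p"
    proof (rule ccontr)
      assume ne: "p' \<noteq> p"
      from lin_lt[OF idx(3) pk ne] show False
      proof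
        assume a: "sqlt P leq (A p') (A p)"
        then show False using nq[OF s1(2)] pt st' by simp
      next
        assume a: "sqlt P leq (A p) (A p')"
        have "sqlt P leq (A p') (A s)" using sqlt_trans[OF idx(3) tk sk _ ts] idx(5) st' by simp
        moreover have "p' \<in> {1..t-1}" using idx st' by auto
        ultimately show False using no_between a by blast
      qed
    qed
  qed
  have c3: "p' \<noteq> t \<and> s' \<noteq> t \<longrightarrow> consecutive P leq A (t - 1) p' s'"
  proof
    assume a: "p' \<noteq> t \<and> s' \<noteq> t"
    show "consecutive P leq A (t - 1) p' s'"
      unfolding consecutive_def
    proof (intro conjI)
      show "p' \<in> {1..t-1}" "s' \<in> {1..t-1}" using a idx by auto
      show "sqlt P leq (A p') (A s')" using idx by simp
      show "\<not> (\<exists>q\<in>{1..t - 1}. sqlt P leq (A p') (A q) \<and> sqlt P leq (A q) (A s'))"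
        using nq by force
    qed
  qed
  show ?thesis using c1 c2 c3 by blast
qed

definition newL :: "'a set \<times> 'a set \<Rightarrow> bool" where
  "newL G \<longleftrightarrow> fst G \<subseteq> A p \<and> snd G \<subseteq> A t \<and> bip_component leq (A p) (A t) (fst G \<union> snd G)"
definition newR :: "'a set \<times> 'a set \<Rightarrow> bool" where
  "newR G \<longleftrightarrow> fst G \<subseteq> A t \<and> snd G \<subseteq> A s \<and> bip_component leq (A t) (A s) (fst G \<union> snd G)"
definition new :: "'a set \<times> 'a set \<Rightarrow> bool" where
  "new G \<longleftrightarrow> newL G \<or> newR G"

lemma old_nodeat:
  assumes "G \<in> F" "\<not> new G"
  shows "nodeat (t - 1) G"
proof -
  obtain t' p' s' where tps: "t' \<in> {2..t}" "consecutive P leq A t' p' s'" "fst G \<subseteq> A p'" "snd G \<subseteq> A s'"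
      "bip_component leq (A p') (A s') (fst G \<union> snd G)"
    using assms(1) Fs unfolding nodeat_def by blast
  show ?thesis
  proof (cases "t' = t")
    case False
    then have "t' \<in> {2..t-1}" using tps by auto
    then show ?thesis using tps unfolding nodeat_def by blast
  next
    case True
    note cc = cons_cases[OF tps(2)[unfolded True]]
    have "p' \<noteq> t"
    proof
      assume "p' = t"
      then have "s' = s" using cc by blast
      then have "newR G" using tps \<open>p' = t\<close> unfolding newR_def by blast
      then show False using assms(2) unfolding new_def by blast
    qed
    moreover have "s' \<noteq> t"
    proof
      assume "s' = t"
      then have "p' = p" using cc by blast
      then have "newL G" using tps \<open>s' = t\<close> unfolding newL_def by blast
      then show False using assms(2) unfolding new_def by blast
    qed
    ultimately have "consecutive P leq A (t - 1) p' s'" using cc by blast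
    moreover have "t - 1 \<in> {2..t-1}" using t by auto
    ultimately show ?thesis using tps unfolding nodeat_def by blast
  qed
qed

lemma nodeat_not_At:
  assumes "nodeat (t - 1) N" "u \<in> fst N \<union> snd N"
  shows "u \<notin> A t"
proof
  assume u: "u \<in> A t"
  obtain j where j: "j \<in> {1..t-1}" "u \<in> A j" using nodeat_elems[OF assms(1) tk1 assms(2)] by blast
  have "j \<in> {1..k}" "j \<noteq> t" using j t by auto
  then show False using disj tk j u by blast
qed

lemma nodeat_in_A:
  assumes "nodeat (t - 1) N" "u \<in> fst N \<union> snd N"
  shows "\<exists>j\<in>{1..t-1}. u \<in> A j"
  using nodeat_elems[OF assms(1) tk1 assms(2)] .

end

context Step begin

definition FL where "FL = {G \<in> F. newL G}"
definition FR where "FR = {G \<in> F. newR G}"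
definition M10 where "M10 = (SOME M. perfect_matching leq (A p) (A t) M)"
definition M20 where "M20 = (SOME M. perfect_matching leq (A t) (A s) M)"

lemma t2k: "t \<in> {2..k}" using t by simp

lemma pm10: "perfect_matching leq (A p) (A t) M10"
proof -
  obtain M where "perfect_matching leq (A p) (A t) M" using pm_exists[OF t2k cpt] by blast
  then show ?thesis unfolding M10_def by (rule someI)
qed

lemma pm20: "perfect_matching leq (A t) (A s) M20"
proof -
  obtain M where "perfect_matching leq (A t) (A s) M" using pm_exists[OF t2k cts] by blast
  then show ?thesis unfolding M20_def by (rule someI)
qed

definition M1 where "M1 = (\<Union>G\<in>FL. M G) \<union> {(a, b). (a, b) \<in> M10 \<and> (\<forall>G\<in>FL. a \<notin> fst G)}"
definition M2 where "M2 = (\<Union>G\<in>FR. M G) \<union> {(a, b). (a, b) \<in> M20 \<and> (\<forall>G\<in>FR. a \<notin> fst G)}"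

lemma pm1: "perfect_matching leq (A p) (A t) M1"
  unfolding M1_def
proof (rule combine_comps[OF pm10 dpt])
  show "\<forall>G\<in>FL. fst G \<subseteq> A p \<and> snd G \<subseteq> A t \<and> bip_component leq (A p) (A t) (fst G \<union> snd G)"
    unfolding FL_def newL_def by blast
  show "\<forall>G\<in>FL. perfect_matching leq (fst G) (snd G) (M G)" using Fpm unfolding FL_def by blast
qed

lemma pm2: "perfect_matching leq (A t) (A s) M2"
  unfolding M2_def
proof (rule combine_comps[OF pm20 dts])
  show "\<forall>G\<in>FR. fst G \<subseteq> A t \<and> snd G \<subseteq> A s \<and> bip_component leq (A t) (A s) (fst G \<union> snd G)"
    unfolding FR_def newR_def by blast
  show "\<forall>G\<in>FR. perfect_matching leq (fst G) (snd G) (M G)" using Fpm unfolding FR_def by blast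
qed

lemma M1_sup: "G \<in> F \<Longrightarrow> newL G \<Longrightarrow> M G \<subseteq> M1"
  unfolding M1_def FL_def by blast
lemma M2_sup: "G \<in> F \<Longrightarrow> newR G \<Longrightarrow> M G \<subseteq> M2"
  unfolding M2_def FR_def by blast

abbreviation "f1 \<equiv> mf M1"
abbreviation "f1i \<equiv> mi M1"
abbreviation "g2 \<equiv> mf M2"
abbreviation "g2i \<equiv> mi M2"

lemma f1: "a \<in> A p \<Longrightarrow> (a, f1 a) \<in> M1 \<and> f1 a \<in> A t \<and> lt leq a (f1 a)"
  using pm_mf[OF pm1] pm_edge[OF pm1] by blast
lemma f1i: "z \<in> A t \<Longrightarrow> (f1i z, z) \<in> M1 \<and> f1i z \<in> A p \<and> lt leq (f1i z) z"
  using pm_mi[OF pm1] pm_edge[OF pm1] by blast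
lemma g2: "z \<in> A t \<Longrightarrow> (z, g2 z) \<in> M2 \<and> g2 z \<in> A s \<and> lt leq z (g2 z)"
  using pm_mf[OF pm2] pm_edge[OF pm2] by blast
lemma g2i: "y \<in> A s \<Longrightarrow> (g2i y, y) \<in> M2 \<and> g2i y \<in> A t \<and> lt leq (g2i y) y"
  using pm_mi[OF pm2] pm_edge[OF pm2] by blast
lemma M1_eq: "(a, b) \<in> M1 \<Longrightarrow> f1 a = b \<and> f1i b = a"
  using pm_mf_eq[OF pm1] pm_mi_eq[OF pm1] by blast
lemma M2_eq: "(a, b) \<in> M2 \<Longrightarrow> g2 a = b \<and> g2i b = a"
  using pm_mf_eq[OF pm2] pm_mi_eq[OF pm2] by blast
lemma f1_f1i: "z \<in> A t \<Longrightarrow> f1 (f1i z) = z" using f1i M1_eq by blast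
lemma f1i_f1: "a \<in> A p \<Longrightarrow> f1i (f1 a) = a" using f1 M1_eq by blast
lemma g2i_g2: "z \<in> A t \<Longrightarrow> g2i (g2 z) = z" using g2 M2_eq by blast

abbreviation "Rps \<equiv> bip_adj leq (A p) (A s)"
abbreviation "Rpt \<equiv> bip_adj leq (A p) (A t)"
abbreviation "Rts \<equiv> bip_adj leq (A t) (A s)"

definition cx :: "'a \<Rightarrow> 'a set" where "cx x = Rps\<^sup>* `` {x}"

lemma cx_comp: "x \<in> A p \<Longrightarrow> bip_component leq (A p) (A s) (cx x)"
  unfolding cx_def by (rule comp_of) simp
lemma cx_self: "x \<in> cx x" unfolding cx_def by simp
lemma cx_sub: "x \<in> A p \<Longrightarrow> cx x \<subseteq> A p \<union> A s"
  using comp_sub cx_comp by blast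

lemma cx_edge:
  assumes "x \<in> A p" "a \<in> A p" "y \<in> A s" "lt leq a y"
  shows "a \<in> cx x \<longleftrightarrow> y \<in> cx x"
proof -
  have e: "(a, y) \<in> Rps" using assms unfolding bip_adj_def by simp
  show ?thesis using comp_closed[OF cx_comp[OF assms(1)] _ e] comp_closed'[OF cx_comp[OF assms(1)] _ e] by blast
qed

lemma ltP: "a \<in> P \<Longrightarrow> b \<in> P \<Longrightarrow> c \<in> P \<Longrightarrow> lt leq a b \<Longrightarrow> lt leq b c \<Longrightarrow> lt leq a c"
  using lt_trans by blast

definition good :: "'a \<Rightarrow> 'a \<Rightarrow> bool" where "good x z \<longleftrightarrow> f1i z \<in> cx x"

lemma good_below:
  assumes "x \<in> A p" "z \<in> A t" "a \<in> A p" "lt leq a z"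
  shows "a \<in> cx x \<longleftrightarrow> good x z"
proof -
  have y0: "g2 z \<in> A s" "lt leq z (g2 z)" using g2[OF assms(2)] by auto
  have fz: "f1i z \<in> A p" "lt leq (f1i z) z" using f1i[OF assms(2)] by auto
  have l1: "lt leq a (g2 z)" using ltP[of a z "g2 z"] assms y0 Ap At As by blast
  have l2: "lt leq (f1i z) (g2 z)" using ltP[of "f1i z" z "g2 z"] assms y0 fz Ap At As by blast
  show ?thesis unfolding good_def using cx_edge[OF assms(1) assms(3) y0(1) l1] cx_edge[OF assms(1) fz(1) y0(1) l2] by simp
qed

lemma good_above:
  assumes "x \<in> A p" "z \<in> A t" "y \<in> A s" "lt leq z y"
  shows "y \<in> cx x \<longleftrightarrow> good x z"
proof -
  have fz: "f1i z \<in> A p" "lt leq (f1i z) z" using f1i[OF assms(2)] by auto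
  have l2: "lt leq (f1i z) y" using ltP[of "f1i z" z y] assms fz Ap At As by blast
  show ?thesis unfolding good_def using cx_edge[OF assms(1) fz(1) assms(3) l2] by simp
qed

definition Inv :: "'a \<Rightarrow> 'a \<Rightarrow> bool" where
  "Inv x u \<longleftrightarrow> (u \<in> A p \<union> A s \<longrightarrow> u \<in> cx x) \<and> (u \<in> A t \<longrightarrow> good x u)"

lemma inv_step:
  assumes x: "x \<in> A p" and iu: "Inv x u" and e: "(u, v) \<in> Rpt \<union> Rts"
  shows "Inv x v"
proof -
  consider (a) "u \<in> A p" "v \<in> A t" "lt leq u v" | (b) "v \<in> A p" "u \<in> A t" "lt leq v u"
    | (c) "u \<in> A t" "v \<in> A s" "lt leq u v" | (d) "v \<in> A t" "u \<in> A s" "lt leq v u"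
    using e unfolding bip_adj_def by blast
  then show ?thesis
  proof cases
    case a
    have "u \<in> cx x" using iu a unfolding Inv_def by blast
    then have "good x v" using good_below[OF x a(2) a(1) a(3)] by simp
    moreover have "v \<notin> A p \<union> A s" using a dpt dts by blast
    ultimately show ?thesis unfolding Inv_def by blast
  next
    case b
    have "good x u" using iu b unfolding Inv_def by blast
    then have "v \<in> cx x" using good_below[OF x b(2) b(1) b(3)] by simp
    moreover have "v \<notin> A t" using b dpt by blast
    ultimately show ?thesis unfolding Inv_def by blast
  next
    case c
    have "good x u" using iu c unfolding Inv_def by blast
    then have "v \<in> cx x" using good_above[OF x c(1) c(2) c(3)] by simp
    moreover have "v \<notin> A t" using c dts by blast
    ultimately show ?thesis unfolding Inv_def by blast
  next
    case d
    have "u \<in> cx x" using iu d unfolding Inv_def by blast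
    then have "good x v" using good_above[OF x d(1) d(2) d(3)] by simp
    moreover have "v \<notin> A p \<union> A s" using d dpt dts by blast
    ultimately show ?thesis unfolding Inv_def by blast
  qed
qed

lemma inv_rtrancl:
  assumes x: "x \<in> A p" and R: "R \<subseteq> Rpt \<union> Rts" and path: "(z0, v) \<in> R\<^sup>*" and i0: "Inv x z0"
  shows "Inv x v"
  using path
proof (induction rule: rtrancl_induct)
  case base
  then show ?case using i0 .
next
  case (step y z)
  have "(y, z) \<in> Rpt \<union> Rts" using step(2) R by blast
  then show ?case using inv_step[OF x step(3)] by blast
qed

lemma inv_start: "x \<in> A p \<Longrightarrow> Inv x (f1 x)"
proof -
  assume x: "x \<in> A p"
  have z: "f1 x \<in> A t" using f1[OF x] by blast
  have "f1 x \<notin> A p \<union> A s" using z dpt dts by blast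
  moreover have "good x (f1 x)" unfolding good_def using f1i_f1[OF x] cx_self by simp
  ultimately show ?thesis unfolding Inv_def by blast
qed

lemma inv_new:
  assumes x: "x \<in> A p" and G: "new G" and z: "f1 x \<in> fst G \<union> snd G" and u: "u \<in> fst G \<union> snd G"
  shows "Inv x u"
proof -
  from G consider (L) "newL G" | (R) "newR G" unfolding new_def by blast
  then show ?thesis
  proof cases
    case L
    then have c: "bip_component leq (A p) (A t) (fst G \<union> snd G)" unfolding newL_def by blast
    have "(f1 x, u) \<in> Rpt\<^sup>*" using comp_eq[OF c z] u by simp
    then show ?thesis using inv_rtrancl[OF x _ _ inv_start[OF x]] by blast
  next
    case R
    then have c: "bip_component leq (A t) (A s) (fst G \<union> snd G)" unfolding newR_def by blast
    have "(f1 x, u) \<in> Rts\<^sup>*" using comp_eq[OF c z] u by simp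
    then show ?thesis using inv_rtrancl[OF x _ _ inv_start[OF x]] by blast
  qed
qed

end

context Step begin

definition Npair :: "'a \<Rightarrow> 'a set \<times> 'a set" where "Npair x = (cx x \<inter> A p, cx x \<inter> A s)"

lemma Npair_un: "x \<in> A p \<Longrightarrow> fst (Npair x) \<union> snd (Npair x) = cx x"
  unfolding Npair_def using cx_sub by auto
lemma Npair_comp: "x \<in> A p \<Longrightarrow> bip_component leq (A p) (A s) (fst (Npair x) \<union> snd (Npair x))"
  using Npair_un cx_comp by simp
lemma Npair_x: "x \<in> A p \<Longrightarrow> x \<in> fst (Npair x)" unfolding Npair_def using cx_self by simp
lemma Npair_fst: "fst (Npair x) \<subseteq> A p" unfolding Npair_def by simp
lemma Npair_snd: "snd (Npair x) \<subseteq> A s" unfolding Npair_def by simp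

lemma xy_lt: "x \<in> A p \<Longrightarrow> g2 (f1 x) \<in> A s \<and> lt leq x (g2 (f1 x))"
proof -
  assume x: "x \<in> A p"
  have a: "f1 x \<in> A t" "lt leq x (f1 x)" using f1[OF x] by auto
  have b: "g2 (f1 x) \<in> A s" "lt leq (f1 x) (g2 (f1 x))" using g2[OF a(1)] by auto
  have "lt leq x (g2 (f1 x))" using ltP[of x "f1 x" "g2 (f1 x)"] x a b Ap At As by blast
  then show ?thesis using b by simp
qed

lemma Npair_y: "x \<in> A p \<Longrightarrow> g2 (f1 x) \<in> snd (Npair x)"
proof -
  assume x: "x \<in> A p"
  have "g2 (f1 x) \<in> cx x" using cx_edge[OF x x] xy_lt[OF x] cx_self by blast
  then show ?thesis unfolding Npair_def using xy_lt[OF x] by simp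
qed

lemma Npair_nodeat: "x \<in> A p \<Longrightarrow> nodeat (t - 1) (Npair x)"
proof -
  assume x: "x \<in> A p"
  have "t - 1 \<in> {2..t-1}" using t by auto
  then show ?thesis unfolding nodeat_def using cons Npair_fst Npair_snd Npair_comp[OF x] by blast
qed

lemma no_child:
  assumes x: "x \<in> A p"
  shows "(G, Npair x) \<notin> childat (t - 1)"
proof
  assume "(G, Npair x) \<in> childat (t - 1)"
  then obtain t' where t': "t' \<in> {3..t-1}" "cstep t' G (Npair x)" unfolding childat_def by blast
  then obtain p' s' where c: "consecutive P leq A (t' - 1) p' s'" "sqlt P leq (A p') (A t')"
      "sqlt P leq (A t') (A s')" "fst (Npair x) \<subseteq> A p'" "snd (Npair x) \<subseteq> A s'"
    unfolding cstep_def by blast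
  have "t' - 1 \<le> k" using t' t by auto
  then have idx: "p' \<in> {1..k}" "s' \<in> {1..k}" using cons_idx[OF c(1)] by auto
  have "p' = p" using disjD[OF pk idx(1) x] Npair_x[OF x] c(4) by blast
  moreover have "s' = s" using disjD[OF sk idx(2)] Npair_y[OF x] c(5) xy_lt[OF x] by blast
  moreover have "t' \<in> {1..t-1}" using t' by auto
  ultimately show False using no_between c(2,3) by blast
qed

lemma no_child_trancl:
  assumes x: "x \<in> A p"
  shows "(G, Npair x) \<notin> (childat (t - 1))\<^sup>+"
proof
  assume "(G, Npair x) \<in> (childat (t - 1))\<^sup>+"
  then obtain G' where "(G', Npair x) \<in> childat (t - 1)" by (meson tranclE)
  then show False using no_child[OF x] by blast
qed

lemma is_child:
  assumes x: "x \<in> A p" and G: "new G" and z: "f1 x \<in> fst G \<union> snd G"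
  shows "(G, Npair x) \<in> childat t"
proof -
  let ?N = "Npair x"
  have I: "Inv x u" if "u \<in> fst G \<union> snd G" for u using inv_new[OF x G z that] .
  have sub: "node_int P leq G \<subseteq> node_int P leq ?N"
  proof
    fix u assume "u \<in> node_int P leq G"
    then obtain g h where gh: "u \<in> P" "g \<in> fst G" "leq g u" "h \<in> snd G" "leq u h"
      unfolding node_int_def up_set_def down_set_def by blast
    from G consider (L) "newL G" | (R) "newR G" unfolding new_def by blast
    then show "u \<in> node_int P leq ?N"
    proof cases
      case L
      have g: "g \<in> A p" "h \<in> A t" using L gh unfolding newL_def by blast+
      have "g \<in> cx x" using I[of g] gh g unfolding Inv_def by blast
      then have g': "g \<in> fst ?N" unfolding Npair_def using g by simp
      have "good x h" using I[of h] gh g unfolding Inv_def by blast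
      have y: "g2 h \<in> A s" "lt leq h (g2 h)" using g2[OF g(2)] by auto
      have "g2 h \<in> cx x" using good_above[OF x g(2) y] \<open>good x h\<close> by simp
      then have y': "g2 h \<in> snd ?N" unfolding Npair_def using y by simp
      have "leq u (g2 h)" using trans[of u h "g2 h"] gh y g At As unfolding lt_def by blast
      then show ?thesis using g' y' gh unfolding node_int_def up_set_def down_set_def by blast
    next
      case R
      have g: "g \<in> A t" "h \<in> A s" using R gh unfolding newR_def by blast+
      have "good x g" using I[of g] gh g unfolding Inv_def by blast
      have a: "f1i g \<in> A p" "lt leq (f1i g) g" using f1i[OF g(1)] by auto
      have "f1i g \<in> cx x" using good_below[OF x g(1) a] \<open>good x g\<close> by simp
      then have a': "f1i g \<in> fst ?N" unfolding Npair_def using a by simp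
      have "h \<in> cx x" using I[of h] gh g unfolding Inv_def by blast
      then have h': "h \<in> snd ?N" unfolding Npair_def using g by simp
      have "leq (f1i g) u" using trans[of "f1i g" g u] gh a g At Ap unfolding lt_def by blast
      then show ?thesis using a' h' gh unfolding node_int_def up_set_def down_set_def by blast
    qed
  qed
  have strict: "\<exists>e. e \<in> node_int P leq ?N \<and> e \<notin> node_int P leq G"
  proof -
    have xy: "g2 (f1 x) \<in> A s" "lt leq x (g2 (f1 x))" using xy_lt[OF x] by auto
    have xP: "x \<in> P" "g2 (f1 x) \<in> P" using x xy Ap As by blast+
    from G consider (L) "newL G" | (R) "newR G" unfolding new_def by blast
    then show ?thesis
    proof cases
      case L
      let ?y = "g2 (f1 x)"
      have yin: "?y \<in> node_int P leq ?N"
        using Npair_x[OF x] Npair_y[OF x] xy xP refl[of ?y] unfolding node_int_def up_set_def down_set_def lt_def by blast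
      have "?y \<notin> node_int P leq G"
      proof
        assume "?y \<in> node_int P leq G"
        then obtain h where h: "h \<in> snd G" "leq ?y h" unfolding node_int_def down_set_def by blast
        have hA: "h \<in> A t" using h L unfolding newL_def by blast
        obtain y' where y': "y' \<in> A s" "leq h y'" using sqleD[OF _ hA] ts unfolding sqlt_def by blast
        have "leq ?y y'" using trans[of ?y h y'] h hA y' xP At As by blast
        then have "?y = y'" using anti[OF sk xy(1) y'(1)] by blast
        then have "h = ?y" using asym[of h ?y] h y' hA At xP by blast
        then show False using hA xy dts by blast
      qed
      then show ?thesis using yin by blast
    next
      case R
      have xin: "x \<in> node_int P leq ?N"
        using Npair_x[OF x] Npair_y[OF x] xy xP refl[of x] unfolding node_int_def up_set_def down_set_def lt_def by blast
      have "x \<notin> node_int P leq G"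
      proof
        assume "x \<in> node_int P leq G"
        then obtain g where g: "g \<in> fst G" "leq g x" unfolding node_int_def up_set_def by blast
        have gA: "g \<in> A t" using g R unfolding newR_def by blast
        obtain z where z: "z \<in> A t" "leq x z" using sqleD[OF _ x] pt unfolding sqlt_def by blast
        have "leq g z" using trans[of g x z] g gA z xP At by blast
        then have "g = z" using anti[OF tk gA z(1)] by blast
        then have "g = x" using asym[of g x] g z gA At xP by blast
        then show False using gA x dpt by blast
      qed
      then show ?thesis using xin by blast
    qed
  qed
  have psub: "node_int P leq G \<subset> node_int P leq ?N" using sub strict by blast
  have "cstep t G ?N"
    unfolding cstep_def
  proof (intro exI conjI)
    show "consecutive P leq A (t - 1) p s" using cons .
    show "sqlt P leq (A p) (A t)" using pt .
    show "sqlt P leq (A t) (A s)" using ts .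
    show "fst ?N \<subseteq> A p" using Npair_fst .
    show "snd ?N \<subseteq> A s" using Npair_snd .
    show "bip_component leq (A p) (A s) (fst ?N \<union> snd ?N)" using Npair_comp[OF x] .
    show "fst G \<subseteq> A p \<and> snd G \<subseteq> A t \<and> bip_component leq (A p) (A t) (fst G \<union> snd G) \<or>
          fst G \<subseteq> A t \<and> snd G \<subseteq> A s \<and> bip_component leq (A t) (A s) (fst G \<union> snd G)"
      using G unfolding new_def newL_def newR_def by blast
    show "node_int P leq G \<subset> node_int P leq ?N" using psub .
  qed
  moreover have "t \<in> {3..t}" using t by simp
  ultimately show ?thesis unfolding childat_def by blast
qed

end

context Step begin

definition Xs where "Xs = {x \<in> A p. \<exists>G\<in>F. new G \<and> f1 x \<in> fst G \<union> snd G}"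
definition Nset where "Nset = Npair ` Xs"
definition F' where "F' = {G \<in> F. \<not> new G} \<union> Nset"
definition M' where "M' N = (if N \<in> F then M N else {(x, g2 (f1 x)) | x. x \<in> fst N})"

lemma Xs_A: "x \<in> Xs \<Longrightarrow> x \<in> A p" unfolding Xs_def by blast

lemma Nset_notF: "N \<in> Nset \<Longrightarrow> N \<notin> F"
proof
  assume N: "N \<in> Nset" "N \<in> F"
  then obtain x where x: "x \<in> Xs" "N = Npair x" unfolding Nset_def by blast
  then obtain G where G: "G \<in> F" "new G" "f1 x \<in> fst G \<union> snd G" unfolding Xs_def by blast
  have "(G, N) \<in> childat t" using is_child[OF Xs_A[OF x(1)] G(2,3)] x by simp
  then have "(G, N) \<in> (childat t)\<^sup>+" by (rule r_into_trancl)
  then show False using Faf G(1) N(2) by blast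
qed

lemma F'_nodeat: "F' \<subseteq> Collect (nodeat (t - 1))"
  unfolding F'_def Nset_def using old_nodeat Npair_nodeat Xs_A by blast

lemma F'_af: "\<forall>G\<in>F'. \<forall>N\<in>F'. (G, N) \<notin> (childat (t - 1))\<^sup>+"
proof (intro ballI notI)
  fix G N assume G: "G \<in> F'" and N: "N \<in> F'" and GN: "(G, N) \<in> (childat (t - 1))\<^sup>+"
  have mono: "(childat (t - 1))\<^sup>+ \<subseteq> (childat t)\<^sup>+" using childat_mono_trancl by simp
  show False
  proof (cases "N \<in> Nset")
    case True
    then obtain x where "x \<in> Xs" "N = Npair x" unfolding Nset_def by blast
    then show False using no_child_trancl[OF Xs_A] GN by blast
  next
    case False
    then have NF: "N \<in> F" using N unfolding F'_def by blast
    show False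
    proof (cases "G \<in> Nset")
      case True
      then obtain x where x: "x \<in> Xs" "G = Npair x" unfolding Nset_def by blast
      then obtain G0 where G0: "G0 \<in> F" "new G0" "f1 x \<in> fst G0 \<union> snd G0" unfolding Xs_def by blast
      have "(G0, G) \<in> childat t" using is_child[OF Xs_A[OF x(1)] G0(2,3)] x by simp
      moreover have "(G, N) \<in> (childat t)\<^sup>+" using GN mono by blast
      ultimately have "(G0, N) \<in> (childat t)\<^sup>+" by (rule trancl_into_trancl2)
      then show False using Faf G0(1) NF by blast
    next
      case False
      then have "G \<in> F" using G unfolding F'_def by blast
      then show False using Faf NF GN mono by blast
    qed
  qed
qed

lemma Npm:
  assumes x: "x \<in> A p"
  shows "perfect_matching leq (fst (Npair x)) (snd (Npair x)) {(x', g2 (f1 x')) | x'. x' \<in> fst (Npair x)}"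
    (is "perfect_matching leq ?X ?Y ?E")
  unfolding perfect_matching_def
proof (intro conjI ballI)
  show "?E \<subseteq> {(a, b). a \<in> ?X \<and> b \<in> ?Y \<and> lt leq a b}"
  proof
    fix e assume "e \<in> ?E"
    then obtain x' where x': "e = (x', g2 (f1 x'))" "x' \<in> ?X" by blast
    have a: "x' \<in> A p" "x' \<in> cx x" using x' unfolding Npair_def by auto
    have y: "g2 (f1 x') \<in> A s" "lt leq x' (g2 (f1 x'))" using xy_lt[OF a(1)] by auto
    have "g2 (f1 x') \<in> cx x" using cx_edge[OF x a(1) y] a by simp
    then have "g2 (f1 x') \<in> ?Y" unfolding Npair_def using y by simp
    then show "e \<in> {(a, b). a \<in> ?X \<and> b \<in> ?Y \<and> lt leq a b}" using x' y by simp
  qed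
next
  fix a assume a: "a \<in> ?X"
  show "\<exists>!b. (a, b) \<in> ?E"
  proof (rule ex1I[of _ "g2 (f1 a)"])
    show "(a, g2 (f1 a)) \<in> ?E" using a by blast
  next
    fix b assume "(a, b) \<in> ?E"
    then show "b = g2 (f1 a)" by blast
  qed
next
  fix b assume b: "b \<in> ?Y"
  have bA: "b \<in> A s" "b \<in> cx x" using b unfolding Npair_def by auto
  define z where "z = g2i b"
  have z: "(z, b) \<in> M2" "z \<in> A t" "lt leq z b" using g2i[OF bA(1)] unfolding z_def by auto
  have gz: "g2 z = b" using M2_eq[OF z(1)] by blast
  define a where "a = f1i z"
  have a: "a \<in> A p" "lt leq a z" "f1 a = z" using f1i[OF z(2)] f1_f1i[OF z(2)] unfolding a_def by auto
  have ab: "lt leq a b" using ltP[of a z b] a z bA Ap At As by blast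
  have "a \<in> cx x" using cx_edge[OF x a(1) bA(1) ab] bA by simp
  then have aX: "a \<in> ?X" unfolding Npair_def using a by simp
  show "\<exists>!a. (a, b) \<in> ?E"
  proof (rule ex1I[of _ a])
    show "(a, b) \<in> ?E" using aX a gz by blast
  next
    fix a' assume "(a', b) \<in> ?E"
    then have a': "a' \<in> ?X" "g2 (f1 a') = b" by auto
    have a'p: "a' \<in> A p" using a' Npair_fst by blast
    have "f1 a' \<in> A t" using f1[OF a'p] by blast
    then have "g2i b = f1 a'" using g2i_g2 a'(2) by metis
    then have "f1 a' = z" unfolding z_def by simp
    then show "a' = a" using f1i_f1[OF a'p] unfolding a_def by metis
  qed
qed

lemma F'_pm: "\<forall>N\<in>F'. perfect_matching leq (fst N) (snd N) (M' N)"
proof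
  fix N assume N: "N \<in> F'"
  show "perfect_matching leq (fst N) (snd N) (M' N)"
  proof (cases "N \<in> F")
    case True
    then show ?thesis using Fpm unfolding M'_def by simp
  next
    case False
    then have "N \<in> Nset" using N unfolding F'_def by blast
    then obtain x where x: "x \<in> Xs" "N = Npair x" unfolding Nset_def by blast
    show ?thesis using Npm[OF Xs_A[OF x(1)]] False x unfolding M'_def by simp
  qed
qed

lemma M'_edge: "x \<in> Xs \<Longrightarrow> (x, g2 (f1 x)) \<in> M' (Npair x)"
proof -
  assume x: "x \<in> Xs"
  have "Npair x \<notin> F" using Nset_notF x unfolding Nset_def by blast
  then show ?thesis unfolding M'_def using Npair_x[OF Xs_A[OF x]] by simp
qed

lemma Npair_F': "x \<in> Xs \<Longrightarrow> Npair x \<in> F'" unfolding F'_def Nset_def by blast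

lemma U'_nodeat: "u \<in> (\<Union>N\<in>F'. fst N \<union> snd N) \<Longrightarrow> u \<notin> A t \<and> (\<exists>j\<in>{1..t-1}. u \<in> A j)"
  using F'_nodeat nodeat_not_At nodeat_in_A by blast

lemma U_At:
  assumes "z \<in> A t" "z \<in> (\<Union>N\<in>F. fst N \<union> snd N)"
  shows "f1i z \<in> Xs"
proof -
  obtain G where G: "G \<in> F" "z \<in> fst G \<union> snd G" using assms by blast
  have "new G"
  proof (rule ccontr)
    assume "\<not> new G"
    then have "nodeat (t - 1) G" using old_nodeat G by blast
    then show False using nodeat_not_At G assms by blast
  qed
  moreover have "f1 (f1i z) = z" using f1_f1i assms by blast
  moreover have "f1i z \<in> A p" using f1i assms by blast
  ultimately show ?thesis unfolding Xs_def using G by auto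
qed

lemma U_sub:
  assumes "u \<in> (\<Union>N\<in>F. fst N \<union> snd N)" "u \<notin> A t"
  shows "u \<in> (\<Union>N\<in>F'. fst N \<union> snd N)"
proof -
  obtain G where G: "G \<in> F" "u \<in> fst G \<union> snd G" using assms by blast
  show ?thesis
  proof (cases "new G")
    case False
    then have "G \<in> F'" unfolding F'_def using G by blast
    then show ?thesis using G by blast
  next
    case True
    have pmG: "perfect_matching leq (fst G) (snd G) (M G)" using Fpm G by blast
    from True consider (L) "newL G" | (R) "newR G" unfolding new_def by blast
    then show ?thesis
    proof cases
      case L
      have "u \<in> fst G" using G L assms(2) unfolding newL_def by blast
      then obtain b where b: "(u, b) \<in> M G" using pmG unfolding perfect_matching_def by blast
      have "b \<in> snd G" using pm_edge[OF pmG b] by blast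
      moreover have "(u, b) \<in> M1" using M1_sup[OF G(1) L] b by blast
      ultimately have "f1 u \<in> snd G" using M1_eq by blast
      moreover have "u \<in> A p" using L \<open>u \<in> fst G\<close> unfolding newL_def by blast
      ultimately have "u \<in> Xs" unfolding Xs_def using G True by blast
      then show ?thesis using Npair_F' Npair_x Xs_A by blast
    next
      case R
      have "u \<in> snd G" using G R assms(2) unfolding newR_def by blast
      then obtain a where a: "(a, u) \<in> M G" using pmG unfolding perfect_matching_def by blast
      have aG: "a \<in> fst G" using pm_edge[OF pmG a] by blast
      have aA: "a \<in> A t" using aG R unfolding newR_def by blast
      have "(a, u) \<in> M2" using M2_sup[OF G(1) R] a by blast
      then have ga: "g2 a = u" using M2_eq by blast
      define x where "x = f1i a"
      have x: "x \<in> A p" "f1 x = a" using f1i[OF aA] f1_f1i[OF aA] unfolding x_def by auto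
      then have "x \<in> Xs" unfolding Xs_def using G(1) True aG by blast
      moreover have "u \<in> snd (Npair x)" using Npair_y[OF x(1)] x ga by simp
      ultimately show ?thesis using Npair_F' by blast
    qed
  qed
qed

end

context Step begin

lemma step_result:
  assumes IH: "Q (t - 1)"
  shows "\<exists>C :: nat \<Rightarrow> 'a set.
           (\<forall>i<width P leq. chain P leq (C i)) \<and>
           (\<forall>i<width P leq. \<forall>j<width P leq. i \<noteq> j \<longrightarrow> C i \<inter> C j = {}) \<and>
           (\<Union>i<width P leq. C i) = (\<Union>N\<in>F. fst N \<union> snd N) \<and>
           (\<forall>N\<in>F. \<forall>(a, b)\<in>M N. \<exists>i<width P leq. a \<in> C i \<and> b \<in> C i)"
proof -
  let ?w = "width P leq"
  have H: "\<exists>C :: nat \<Rightarrow> 'a set. (\<forall>i<?w. chain P leq (C i)) \<and>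
      (\<forall>i<?w. \<forall>j<?w. i \<noteq> j \<longrightarrow> C i \<inter> C j = {}) \<and>
      (\<Union>i<?w. C i) = (\<Union>N\<in>F'. fst N \<union> snd N) \<and>
      (\<forall>N\<in>F'. \<forall>(a, b)\<in>M' N. \<exists>i<?w. a \<in> C i \<and> b \<in> C i)"
    by (rule IH[unfolded Q_def, rule_format, OF F'_nodeat F'_af[rule_format] F'_pm[rule_format]])
  then obtain C where Call: "(\<forall>i<?w. chain P leq (C i)) \<and>
      (\<forall>i<?w. \<forall>j<?w. i \<noteq> j \<longrightarrow> C i \<inter> C j = {}) \<and>
      (\<Union>i<?w. C i) = (\<Union>N\<in>F'. fst N \<union> snd N) \<and>
      (\<forall>N\<in>F'. \<forall>(a, b)\<in>M' N. \<exists>i<?w. a \<in> C i \<and> b \<in> C i)" by (rule exE)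
  note Cch = Call[THEN conjunct1]
  note Cdj = Call[THEN conjunct2, THEN conjunct1]
  note Cun = Call[THEN conjunct2, THEN conjunct2, THEN conjunct1]
  note Ced = Call[THEN conjunct2, THEN conjunct2, THEN conjunct2]
  define U where "U = (\<Union>N\<in>F. fst N \<union> snd N)"
  define C' where "C' i = (C i \<inter> U) \<union> {z \<in> A t \<inter> U. f1i z \<in> C i}" for i
  have inC: "u \<in> (\<Union>N\<in>F'. fst N \<union> snd N) \<Longrightarrow> \<exists>i<?w. u \<in> C i" for u using Cun by blast
  have Cin: "i < ?w \<Longrightarrow> u \<in> C i \<Longrightarrow> u \<in> (\<Union>N\<in>F'. fst N \<union> snd N)" for i u using Cun by blast
  have uniq: "i < ?w \<Longrightarrow> j < ?w \<Longrightarrow> u \<in> C i \<Longrightarrow> u \<in> C j \<Longrightarrow> i = j" for i j u using Cdj by blast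
  have CP: "i < ?w \<Longrightarrow> C i \<subseteq> P" for i using Cch unfolding chain_def by blast
  have Ccmp: "i < ?w \<Longrightarrow> u \<in> C i \<Longrightarrow> v \<in> C i \<Longrightarrow> leq u v \<or> leq v u" for i u v
    using Cch unfolding chain_def by blast
  have Xs_F': "x \<in> Xs \<Longrightarrow> x \<in> (\<Union>N\<in>F'. fst N \<union> snd N)" for x
    using Npair_F' Npair_x Xs_A by blast
  have Xs_edge: "x \<in> Xs \<Longrightarrow> \<exists>i<?w. x \<in> C i \<and> g2 (f1 x) \<in> C i" for x
    using Ced Npair_F' M'_edge by fastforce
  have cmp: "leq c z \<or> leq z c"
    if i: "i < ?w" and c: "c \<in> C i" and z: "z \<in> A t" "z \<in> U" and xi: "f1i z \<in> C i" for i c z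
  proof -
    define x where "x = f1i z"
    have xX: "x \<in> Xs" using U_At z unfolding U_def x_def by blast
    have xA: "x \<in> A p" "lt leq x z" "f1 x = z" using f1i[OF z(1)] f1_f1i[OF z(1)] unfolding x_def by auto
    define y where "y = g2 z"
    have yA: "y \<in> A s" "lt leq z y" using g2[OF z(1)] unfolding y_def by auto
    obtain j where j: "j < ?w" "x \<in> C j" "g2 (f1 x) \<in> C j" using Xs_edge[OF xX] by blast
    have "j = i" using uniq[OF j(1) i j(2)] xi unfolding x_def by simp
    then have yi: "y \<in> C i" using j xA unfolding y_def by simp
    have cF': "c \<in> (\<Union>N\<in>F'. fst N \<union> snd N)" using Cin[OF i c] .
    obtain j' where j': "j' \<in> {1..t-1}" "c \<in> A j'" using U'_nodeat[OF cF'] by blast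
    have j'k: "j' \<in> {1..k}" using j' t by auto
    have P3: "c \<in> P" "x \<in> P" "y \<in> P" "z \<in> P" using CP[OF i] c xA yA z Ap As At by blast+
    have xz: "leq x z" and zy: "leq z y" using xA yA unfolding lt_def by auto
    show ?thesis
    proof (rule ccontr)
      assume nc: "\<not> (leq c z \<or> leq z c)"
      have ncx: "\<not> leq c x" using nc trans[of c x z] P3 xz by blast
      have nyc: "\<not> leq y c" using nc trans[of z y c] P3 zy by blast
      have xc: "leq x c" using Ccmp[OF i xi c] ncx unfolding x_def by blast
      have cy: "leq c y" using Ccmp[OF i c yi] nyc by blast
      have jp: "j' \<noteq> p"
      proof
        assume "j' = p"
        then have "x = c" using anti[OF pk xA(1)] j' xc by blast
        then show False using ncx refl P3 by blast
      qed
      have js: "j' \<noteq> s"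
      proof
        assume "j' = s"
        then have "c = y" using anti[OF sk _ yA(1) cy] j' by blast
        then show False using nyc refl P3 by blast
      qed
      from lin_lt[OF j'k pk jp] show False
      proof
        assume a: "sqlt P leq (A j') (A p)"
        obtain a' where a': "a' \<in> A p" "leq c a'" using sqleD[OF _ j'(2)] a unfolding sqlt_def by blast
        have "leq x a'" using trans[of x c a'] xc a' P3 Ap by blast
        then have "x = a'" using anti[OF pk xA(1) a'(1)] by blast
        then show False using a' ncx by blast
      next
        assume a: "sqlt P leq (A p) (A j')"
        from lin_lt[OF j'k sk js] show False
        proof
          assume b: "sqlt P leq (A j') (A s)"
          show False by (rule no_between[OF j'(1) a b])
        next
          assume b: "sqlt P leq (A s) (A j')"
          obtain b' where b': "b' \<in> A j'" "leq y b'" using sqleD[OF _ yA(1)] b unfolding sqlt_def by blast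
          have "leq c b'" using trans[of c y b'] cy b' P3 AP[OF j'k] by blast
          then have "c = b'" using anti[OF j'k j'(2) b'(1)] by blast
          then show False using b' nyc by blast
        qed
      qed
    qed
  qed
  show ?thesis
  proof (rule exI[of _ C'], intro conjI allI impI)
    fix i assume i: "i < ?w"
    show "chain P leq (C' i)"
      unfolding chain_def
    proof (intro conjI ballI)
      show "C' i \<subseteq> P" unfolding C'_def using CP[OF i] At by blast
    next
      fix u v assume u: "u \<in> C' i" and v: "v \<in> C' i"
      consider (cc) "u \<in> C i" "v \<in> C i" | (cz) "u \<in> C i" "v \<in> A t" "v \<in> U" "f1i v \<in> C i"
        | (zc) "v \<in> C i" "u \<in> A t" "u \<in> U" "f1i u \<in> C i"
        | (zz) "u \<in> A t" "v \<in> A t" "f1i u \<in> C i" "f1i v \<in> C i"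
        using u v unfolding C'_def by blast
      then show "leq u v \<or> leq v u"
      proof cases
        case cc then show ?thesis using Ccmp[OF i] by blast
      next
        case cz then show ?thesis using cmp[OF i] by blast
      next
        case zc then show ?thesis using cmp[OF i] by blast
      next
        case zz
        have "f1i u \<in> A p" "f1i v \<in> A p" using f1i zz by blast+
        moreover have "leq (f1i u) (f1i v) \<or> leq (f1i v) (f1i u)" using Ccmp[OF i] zz by blast
        ultimately have "f1i u = f1i v" using anti[OF pk] by metis
        then have "u = v" using f1_f1i zz by metis
        then show ?thesis using refl zz At by blast
      qed
    qed
  next
    fix i j assume i: "i < ?w" and j: "j < ?w" and ij: "i \<noteq> j"
    show "C' i \<inter> C' j = {}"
    proof (rule ccontr)
      assume "C' i \<inter> C' j \<noteq> {}"
      then obtain u where u: "u \<in> C' i" "u \<in> C' j" by blast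
      have notA: "\<And>l. l < ?w \<Longrightarrow> u \<in> C l \<Longrightarrow> u \<notin> A t" using Cin U'_nodeat by blast
      consider (cc) "u \<in> C i" "u \<in> C j" | (cz) "u \<in> C i" "u \<in> A t" | (zc) "u \<in> C j" "u \<in> A t"
        | (zz) "f1i u \<in> C i" "f1i u \<in> C j"
        using u unfolding C'_def by blast
      then show False
      proof cases
        case cc then show ?thesis using uniq[OF i j] ij by blast
      next
        case cz then show ?thesis using notA[OF i] by blast
      next
        case zc then show ?thesis using notA[OF j] by blast
      next
        case zz then show ?thesis using uniq[OF i j] ij by blast
      qed
    qed
  next
    show "(\<Union>i<?w. C' i) = (\<Union>N\<in>F. fst N \<union> snd N)"
    proof
      show "(\<Union>i<?w. C' i) \<subseteq> (\<Union>N\<in>F. fst N \<union> snd N)" unfolding C'_def U_def by blast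
    next
      show "(\<Union>N\<in>F. fst N \<union> snd N) \<subseteq> (\<Union>i<?w. C' i)"
      proof
        fix u assume uU: "u \<in> (\<Union>N\<in>F. fst N \<union> snd N)"
        show "u \<in> (\<Union>i<?w. C' i)"
        proof (cases "u \<in> A t")
          case True
          have "f1i u \<in> Xs" using U_At[OF True uU] .
          then obtain i where i: "i < ?w" "f1i u \<in> C i" using inC[OF Xs_F'] by blast
          have "u \<in> C' i" unfolding C'_def U_def using True uU i(2) by simp
          then show ?thesis using i by blast
        next
          case False
          obtain i where i: "i < ?w" "u \<in> C i" using inC[OF U_sub[OF uU False]] by blast
          have "u \<in> C' i" unfolding C'_def U_def using uU i(2) by simp
          then show ?thesis using i by blast
        qed
      qed
    qed
  next
    show "\<forall>N\<in>F. \<forall>(a, b)\<in>M N. \<exists>i<?w. a \<in> C' i \<and> b \<in> C' i"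
    proof (intro ballI)
      fix N e assume N: "N \<in> F" and e: "e \<in> M N"
      obtain a b where ab: "e = (a, b)" by (cases e)
      have pmN: "perfect_matching leq (fst N) (snd N) (M N)" using Fpm N by blast
      have eab: "(a, b) \<in> M N" using e ab by simp
      have abN: "a \<in> fst N" "b \<in> snd N" using pm_edge[OF pmN eab] by blast+
      have aU: "a \<in> U" unfolding U_def using abN(1) N by (intro UN_I[of N]) auto
      have bU: "b \<in> U" unfolding U_def using abN(2) N by (intro UN_I[of N]) auto
      have "\<exists>i<?w. a \<in> C' i \<and> b \<in> C' i"
      proof (cases "new N")
        case False
        then have NF': "N \<in> F'" unfolding F'_def using N by blast
        have "M' N = M N" unfolding M'_def using N by simp
        have X: "\<forall>(a, b)\<in>M' N. \<exists>i<?w. a \<in> C i \<and> b \<in> C i" using Ced NF' by (rule bspec)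
        have "(a, b) \<in> M' N" using e ab \<open>M' N = M N\<close> by simp
        then have "case (a, b) of (a, b) \<Rightarrow> \<exists>i<?w. a \<in> C i \<and> b \<in> C i" using X by (rule bspec[rotated])
        then obtain i where i: "i < ?w" "a \<in> C i" "b \<in> C i" by auto
        have "a \<in> C' i" "b \<in> C' i" by (simp_all add: C'_def i aU bU)
        then show ?thesis using i(1) by blast
      next
        case True
        then consider (L) "newL N" | (R) "newR N" unfolding new_def by blast
        then show ?thesis
        proof cases
          case L
          have m: "(a, b) \<in> M1" using M1_sup[OF N L] eab by blast
          have fa: "f1 a = b" "f1i b = a" using M1_eq[OF m] by auto
          have aA: "a \<in> A p" "b \<in> A t" using pm_edge[OF pm1 m] by auto
          have "f1 a \<in> fst N \<union> snd N" using fa abN by simp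
          then have "\<exists>G\<in>F. new G \<and> f1 a \<in> fst G \<union> snd G" using N True by blast
          then have "a \<in> Xs" unfolding Xs_def using aA(1) by simp
          then obtain i where i: "i < ?w" "a \<in> C i" using inC[OF Xs_F'] by blast
          have "a \<in> C' i" by (simp add: C'_def i aU)
          moreover have "b \<in> C' i" unfolding C'_def using i aA bU fa by simp
          ultimately show ?thesis using i by blast
        next
          case R
          have m: "(a, b) \<in> M2" using M2_sup[OF N R] eab by blast
          have ga: "g2 a = b" using M2_eq[OF m] by auto
          have aA: "a \<in> A t" using pm_edge[OF pm2 m] by auto
          have xX: "f1i a \<in> Xs" using aU unfolding U_def by (rule U_At[OF aA])
          obtain i where i: "i < ?w" "f1i a \<in> C i" "g2 (f1 (f1i a)) \<in> C i" using Xs_edge[OF xX] by blast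
          have "b \<in> C i" using i(3) f1_f1i[OF aA] ga by simp
          then have "b \<in> C' i" by (simp add: C'_def bU)
          moreover have "a \<in> C' i" by (simp add: C'_def i aA aU)
          ultimately show ?thesis using i by blast
        qed
      qed
      then show "case e of (a, b) \<Rightarrow> \<exists>i<?w. a \<in> C' i \<and> b \<in> C' i" using ab by simp
    qed
  qed
qed

end

context RP begin

lemma Q_step:
  assumes t: "t \<in> {3..k}" and IH: "Q (t - 1)"
  shows "Q t"
  unfolding Q_def
proof (intro allI impI)
  fix F :: "('a set \<times> 'a set) set" and M :: "'a set \<times> 'a set \<Rightarrow> ('a \<times> 'a) set"
  assume Fs: "F \<subseteq> Collect (nodeat t)"
    and af: "\<forall>G\<in>F. \<forall>N\<in>F. (G, N) \<notin> (childat t)\<^sup>+"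
    and pm: "\<forall>N\<in>F. perfect_matching leq (fst N) (snd N) (M N)"
  obtain p s where ps: "consecutive P leq A (t - 1) p s" "sqlt P leq (A p) (A t)" "sqlt P leq (A t) (A s)"
    using insert_point[OF t] by blast
  interpret S: Step P leq A k t p s F M
    by (unfold_locales; (rule t ps Fs af pm)?)
  show "\<exists>C :: nat \<Rightarrow> 'a set.
           (\<forall>i<width P leq. chain P leq (C i)) \<and>
           (\<forall>i<width P leq. \<forall>j<width P leq. i \<noteq> j \<longrightarrow> C i \<inter> C j = {}) \<and>
           (\<Union>i<width P leq. C i) = (\<Union>N\<in>F. fst N \<union> snd N) \<and>
           (\<forall>N\<in>F. \<forall>(a, b)\<in>M N. \<exists>i<width P leq. a \<in> C i \<and> b \<in> C i)"
    by (rule S.step_result[OF IH])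
qed

lemma Q_all: "2 \<le> n \<Longrightarrow> n \<le> k \<Longrightarrow> Q n"
proof (induction n)
  case 0
  then show ?case by simp
next
  case (Suc n)
  show ?case
  proof (cases "Suc n = 2")
    case True
    show ?thesis unfolding True by (rule base)
  next
    case False
    then have "2 \<le> n" "n \<le> k" using Suc.prems by auto
    then have "Q n" using Suc.IH by blast
    moreover have "Suc n \<in> {3..k}" using Suc.prems False by auto
    ultimately show ?thesis using Q_step[of "Suc n"] by simp
  qed
qed

lemma Qk: "Q k" using Q_all[OF k2] by simp

end

theorem proposition11:
  fixes P :: "'a set" and leq :: "'a \<Rightarrow> 'a \<Rightarrow> bool" and A :: "nat \<Rightarrow> 'a set" and k w :: nat
    and \<F> :: "('a set \<times> 'a set) set" and M :: "'a set \<times> 'a set \<Rightarrow> ('a \<times> 'a) set"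
  assumes reg: "regular_poset P leq A k"
    and w: "w = width P leq"
    and af: "ancestor_free P leq A k \<F>"
    and match: "\<forall>N\<in>\<F>. perfect_matching leq (fst N) (snd N) (M N)"
  shows "\<exists>C :: nat \<Rightarrow> 'a set.
           (\<forall>i<w. chain P leq (C i)) \<and>
           (\<forall>i<w. \<forall>j<w. i \<noteq> j \<longrightarrow> C i \<inter> C j = {}) \<and>
           (\<Union>i<w. C i) = (\<Union>N\<in>\<F>. fst N \<union> snd N) \<and>
           (\<forall>N\<in>\<F>. \<forall>(a, b)\<in>M N. \<exists>i<w. a \<in> C i \<and> b \<in> C i)"
proof (cases "A 1 = {}")
  case True
  have finP: "finite P" using reg unfolding regular_poset_def by blast
  have k2: "2 \<le> k" using reg unfolding regular_poset_def by blast
  have w0: "width P leq = 0"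
  proof -
    have "maximum_antichain P leq (A 1)" using reg k2 unfolding regular_poset_def by auto
    then show ?thesis using True unfolding maximum_antichain_def by simp
  qed
  have Aempty: "A i = {}" if "i \<in> {1..k}" for i
  proof -
    have ma: "maximum_antichain P leq (A i)" using reg that unfolding regular_poset_def by blast
    then have "A i \<subseteq> P" unfolding maximum_antichain_def antichain_def by blast
    then have "finite (A i)" using finP finite_subset by blast
    moreover have "card (A i) = 0" using ma w0 unfolding maximum_antichain_def by simp
    ultimately show ?thesis by simp
  qed
  have Fe: "\<F> = {}"
  proof (rule ccontr)
    assume "\<F> \<noteq> {}"
    then obtain N where "N \<in> \<F>" by blast
    then have "is_node P leq A k N" using af unfolding ancestor_free_def nodes_def by blast
    then obtain t p s where tps: "t \<in> {2..k}" "consecutive P leq A t p s"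
      unfolding is_node_def by blast
    then have "p \<in> {1..k}" "s \<in> {1..k}" "A p \<noteq> A s"
      unfolding consecutive_def sqlt_def by auto
    then show False using Aempty by simp
  qed
  show ?thesis
    by (rule exI[of _ "\<lambda>_. {}"]) (simp add: Fe w w0 chain_def)
next
  case False
  interpret RP P leq A k using reg False by unfold_locales
  have Fs: "\<F> \<subseteq> Collect (nodeat k)"
    using af unfolding ancestor_free_def nodes_def nodeat_k by blast
  have Faf: "\<forall>G\<in>\<F>. \<forall>N\<in>\<F>. (G, N) \<notin> (childat k)\<^sup>+"
    using af unfolding ancestor_free_def node_descendant_def childat_k by blast
  show ?thesis
    unfolding w by (rule Qk[unfolded Q_def, rule_format, OF Fs Faf[rule_format] match[rule_format]])
qed

end
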